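(* Let $J$ be a bounded half-line Jacobi matrix with $0<\inf_na_n\le\sup_na_n<\infty$, and let $\mathcal R$ be the set of its right limits. Let $\Xi$ be the set of $x_0\in\mathbb{R}$ such that for every $J^{(r)}\in\mathcal R$ and every nonzero solution $(u_n)_{n\in\mathbb{Z}}$ of $a^{(r)}_nu_{n+1}+b^{(r)}_nu_n+a^{(r)}_{n-1}u_{n-1}=x_0u_n$ one has $\sum_{n=-\infty}^0|u_n|^2=\infty$. Then: (i) for every compact $\tilde K\subset\Xi$, $\sup_{x_0\in\tilde K}p_n(x_0)^2/K_n(x_0,x_0)\to0$ as $n\to\infty$ (the Nevai condition holds uniformly on $\tilde K$); (ii) if $\Xi\supseteq\sigma_{\mathrm{ess}}(J)$, then $\sup_{x_0\in\sigma(J)}p_n(x_0)^2/K_n(x_0,x_0)\to0$ (the Nevai condition holds uniformly on $\sigma(J)$).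
   Context: A half-line Jacobi matrix $J$ with parameters $\{a_n,b_n\}_{n\ge1}$ ($a_n>0$) acts on $\ell^2(\{1,2,\dots\})$ by $J_{nn}=b_n$, $J_{n,n+1}=J_{n+1,n}=a_n$; $\rho$ is its spectral measure for $\delta_1$, $p_n$ ($n\ge0$) its orthonormal polynomials ($p_{-1}=0$, $p_0=1$, $xp_n=a_{n+1}p_{n+1}+b_{n+1}p_n+a_np_{n-1}$), and $K_n(x,y)=\sum_{j=0}^np_j(x)p_j(y)$. A two-sided sequence $\{a^{(r)}_n,b^{(r)}_n\}_{n\in\mathbb{Z}}$ is a right limit of $J$ if there are $m_j\to\infty$ with $a_{m_j+n}\to a^{(r)}_n$ and $b_{m_j+n}\to b^{(r)}_n$ for every $n\in\mathbb{Z}$; $J^{(r)}$ is the corresponding two-sided Jacobi matrix. The Nevai condition at $x_0$ means $K_n(x,x_0)^2\,d\rho(x)/K_n(x_0,x_0)\to\delta_{x_0}$ weakly. *)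

theory Defs
  imports "HOL-Analysis.Analysis"
begin

text \<open>Jacobi parameters are sequences a, b :: nat => real, used at indices n >= 1
  (the values at index 0 are irrelevant).  Vectors in l^2({1,2,...}) are represented
  as functions u :: nat => real with u 0 = 0.\<close>

definition l2_half :: "(nat \<Rightarrow> real) set" where
  "l2_half = {u. u 0 = 0 \<and> summable (\<lambda>n. (u n)\<^sup>2)}"

definition jacobi_op :: "(nat \<Rightarrow> real) \<Rightarrow> (nat \<Rightarrow> real) \<Rightarrow> (nat \<Rightarrow> real) \<Rightarrow> (nat \<Rightarrow> real)" where
  "jacobi_op a b u = (\<lambda>n. if n = 0 then 0
      else a (n - 1) * u (n - 1) + b n * u n + a n * u (n + 1))"

definition jacobi_spectrum :: "(nat \<Rightarrow> real) \<Rightarrow> (nat \<Rightarrow> real) \<Rightarrow> real set" where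
  "jacobi_spectrum a b =
     {x. \<not> bij_betw (\<lambda>u. (\<lambda>n. jacobi_op a b u n - x * u n)) l2_half l2_half}"

definition jacobi_eigenspace :: "(nat \<Rightarrow> real) \<Rightarrow> (nat \<Rightarrow> real) \<Rightarrow> real \<Rightarrow> (nat \<Rightarrow> real) set" where
  "jacobi_eigenspace a b x = {u \<in> l2_half. jacobi_op a b u = (\<lambda>n. x * u n)}"

definition jacobi_disc_spectrum :: "(nat \<Rightarrow> real) \<Rightarrow> (nat \<Rightarrow> real) \<Rightarrow> real set" where
  "jacobi_disc_spectrum a b =
     {x \<in> jacobi_spectrum a b.
        (\<exists>e>0. ball x e \<inter> jacobi_spectrum a b = {x}) \<and>
        jacobi_eigenspace a b x \<noteq> {\<lambda>n. 0} \<and>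
        (\<exists>vs :: (nat \<Rightarrow> real) list. \<forall>u \<in> jacobi_eigenspace a b x.
            \<exists>c :: nat \<Rightarrow> real. u = (\<lambda>n. \<Sum>i<length vs. c i * (vs ! i) n))}"

definition jacobi_ess_spectrum :: "(nat \<Rightarrow> real) \<Rightarrow> (nat \<Rightarrow> real) \<Rightarrow> real set" where
  "jacobi_ess_spectrum a b = jacobi_spectrum a b - jacobi_disc_spectrum a b"

text \<open>Orthonormal polynomials: p_0 = 1, p_{-1} = 0,
  x p_n = a_{n+1} p_{n+1} + b_{n+1} p_n + a_n p_{n-1}.\<close>
fun opoly :: "(nat \<Rightarrow> real) \<Rightarrow> (nat \<Rightarrow> real) \<Rightarrow> nat \<Rightarrow> real \<Rightarrow> real" where
  "opoly a b 0 x = 1"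
| "opoly a b (Suc 0) x = (x - b 1) / a 1"
| "opoly a b (Suc (Suc n)) x =
     ((x - b (n + 2)) * opoly a b (Suc n) x - a (n + 1) * opoly a b n x) / a (n + 2)"

definition CD_kernel :: "(nat \<Rightarrow> real) \<Rightarrow> (nat \<Rightarrow> real) \<Rightarrow> nat \<Rightarrow> real \<Rightarrow> real \<Rightarrow> real" where
  "CD_kernel a b n x y = (\<Sum>j\<le>n. opoly a b j x * opoly a b j y)"

definition is_right_limit ::
  "(nat \<Rightarrow> real) \<Rightarrow> (nat \<Rightarrow> real) \<Rightarrow> (int \<Rightarrow> real) \<Rightarrow> (int \<Rightarrow> real) \<Rightarrow> bool" where
  "is_right_limit a b ar br \<longleftrightarrow>
     (\<exists>m :: nat \<Rightarrow> nat. filterlim m at_top sequentially \<and>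
        (\<forall>n :: int. ((\<lambda>j. a (nat (int (m j) + n))) \<longlongrightarrow> ar n) sequentially \<and>
                    ((\<lambda>j. b (nat (int (m j) + n))) \<longlongrightarrow> br n) sequentially))"

definition Xi_set :: "(nat \<Rightarrow> real) \<Rightarrow> (nat \<Rightarrow> real) \<Rightarrow> real set" where
  "Xi_set a b = {x0. \<forall>ar br. is_right_limit a b ar br \<longrightarrow>
      (\<forall>u :: int \<Rightarrow> complex.
         (\<forall>n. of_real (ar n) * u (n + 1) + of_real (br n) * u n + of_real (ar (n - 1)) * u (n - 1)
                = of_real x0 * u n) \<and> u \<noteq> (\<lambda>n. 0)
         \<longrightarrow> \<not> summable (\<lambda>k :: nat. (cmod (u (- int k)))\<^sup>2))}"

end

theory Submission imports Defs begin


definition sm :: "(nat \<Rightarrow> real) \<Rightarrow> bool" where "sm u \<longleftrightarrow> summable (\<lambda>n. (u n)\<^sup>2)"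
definition sq :: "(nat \<Rightarrow> real) \<Rightarrow> real" where "sq u = (if sm u then (\<Sum>n. (u n)\<^sup>2) else 0)"
definition nr :: "(nat \<Rightarrow> real) \<Rightarrow> real" where "nr u = sqrt (sq u)"

lemma l2_half_sm: "u \<in> l2_half \<longleftrightarrow> u 0 = 0 \<and> sm u"
  by (simp add: l2_half_def sm_def)

lemma sq_nonneg: "0 \<le> sq u"
  by (simp add: sq_def sm_def suminf_nonneg)

lemma nr_nonneg: "0 \<le> nr u" by (simp add: nr_def sq_nonneg)

lemma nr_sq: "(nr u)\<^sup>2 = sq u" by (simp add: nr_def sq_nonneg)

lemma psum_le_sq: "sm u \<Longrightarrow> (\<Sum>n\<in>F. (u n)\<^sup>2) \<le> sq u" if "finite F"
  unfolding sq_def using that by (simp add: sm_def sum_le_suminf)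

lemma psum_bound:
  assumes "\<And>N. (\<Sum>n<N. (u n)\<^sup>2) \<le> S"
  shows "sm u" "sq u \<le> S"
proof -
  show "sm u" unfolding sm_def by (rule summableI_nonneg_bounded[where x=S]) (use assms in auto)
  then show "sq u \<le> S" unfolding sq_def using assms by (auto simp: sm_def intro: suminf_le_const)
qed

lemma coord_le_nr: assumes "sm u" shows "\<bar>u n\<bar> \<le> nr u"
proof -
  have "(u n)\<^sup>2 \<le> sq u" using psum_le_sq[of "{n}" u] assms by simp
  then show ?thesis unfolding nr_def by (metis real_sqrt_abs real_sqrt_le_mono)
qed

lemma psum_le_nr: assumes "sm u" "finite F" shows "sqrt (\<Sum>n\<in>F. (u n)\<^sup>2) \<le> nr u"
  using psum_le_sq[OF assms(2,1)] unfolding nr_def by simp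

lemma nr_add: assumes "sm u" "sm v"
  shows "sm (\<lambda>n. u n + v n)" "nr (\<lambda>n. u n + v n) \<le> nr u + nr v"
proof -
  have PB: "\<And>N. (\<Sum>n<N. (u n + v n)\<^sup>2) \<le> (nr u + nr v)\<^sup>2"
  proof -
    fix N
    have "sqrt (\<Sum>n<N. (u n + v n)\<^sup>2) \<le> sqrt (\<Sum>n<N. (u n)\<^sup>2) + sqrt (\<Sum>n<N. (v n)\<^sup>2)"
      using L2_set_triangle_ineq[of u v "{..<N}"] by (simp add: L2_set_def)
    also have "\<dots> \<le> nr u + nr v" using psum_le_nr[OF assms(1)] psum_le_nr[OF assms(2)]
      by (intro add_mono) auto
    finally have h: "sqrt (\<Sum>n<N. (u n + v n)\<^sup>2) \<le> nr u + nr v" .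
    have "(\<Sum>n<N. (u n + v n)\<^sup>2) = (sqrt (\<Sum>n<N. (u n + v n)\<^sup>2))\<^sup>2"
      by (subst real_sqrt_pow2) (auto intro!: sum_nonneg)
    also have "\<dots> \<le> (nr u + nr v)\<^sup>2" by (rule power_mono[OF h]) (auto intro!: sum_nonneg)
    finally show "(\<Sum>n<N. (u n + v n)\<^sup>2) \<le> (nr u + nr v)\<^sup>2" .
  qed
  from psum_bound[OF PB] show "sm (\<lambda>n. u n + v n)" by blast
  from psum_bound[OF PB] have "sq (\<lambda>n. u n + v n) \<le> (nr u + nr v)\<^sup>2" by blast
  then show "nr (\<lambda>n. u n + v n) \<le> nr u + nr v" unfolding nr_def
    by (metis add_nonneg_nonneg nr_def nr_nonneg real_sqrt_le_iff real_sqrt_unique)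
qed

lemma nr_scale: "nr (\<lambda>n. k * u n) = \<bar>k\<bar> * nr u" "sm u \<Longrightarrow> sm (\<lambda>n. k * u n)"
proof -
  have "sq (\<lambda>n. k * u n) = k\<^sup>2 * sq u"
  proof (cases "k = 0")
    case True then show ?thesis by (simp add: sq_def sm_def)
  next
    case False
    have e: "sm (\<lambda>n. k * u n) \<longleftrightarrow> sm u" unfolding sm_def power_mult_distrib
      using False summable_cmult_iff[of "k\<^sup>2" "\<lambda>n. (u n)\<^sup>2"] by simp
    show ?thesis unfolding sq_def e by (auto simp: power_mult_distrib sm_def suminf_mult)
  qed
  then show "nr (\<lambda>n. k * u n) = \<bar>k\<bar> * nr u" by (simp add: nr_def real_sqrt_mult)
  show "sm u \<Longrightarrow> sm (\<lambda>n. k * u n)" unfolding sm_def by (simp add: power_mult_distrib summable_mult)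
qed

lemma sm_minus: "sm u \<Longrightarrow> sm (\<lambda>n. - u n)" "nr (\<lambda>n. - u n) = nr u"
  by (simp_all add: sm_def nr_def sq_def)

lemma nr_diff: assumes "sm u" "sm v"
  shows "sm (\<lambda>n. u n - v n)" "nr (\<lambda>n. u n - v n) \<le> nr u + nr v"
  using nr_add[OF assms(1) sm_minus(1)[OF assms(2)]] sm_minus(2)[of v] by simp_all

lemma nr_zero: assumes "sm u" "nr u = 0" shows "u = (\<lambda>n. 0)"
  using coord_le_nr[OF assms(1)] assms(2) by fastforce

lemma sm_zero[simp]: "sm (\<lambda>n. 0)" and nr_zero0[simp]: "nr (\<lambda>n. 0) = 0"
  by (simp_all add: sm_def nr_def sq_def)

lemma nr_pos: "sm u \<Longrightarrow> u \<noteq> (\<lambda>n. 0) \<Longrightarrow> 0 < nr u"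
  using nr_zero nr_nonneg by (metis less_eq_real_def)



definition PP :: "(nat \<Rightarrow> real) \<Rightarrow> (nat \<Rightarrow> real) \<Rightarrow> real \<Rightarrow> nat \<Rightarrow> real" where
  "PP a b x n = (if n = 0 then 0 else opoly a b (n - 1) x)"

definition TT :: "(nat \<Rightarrow> real) \<Rightarrow> (nat \<Rightarrow> real) \<Rightarrow> real \<Rightarrow> (nat \<Rightarrow> real) \<Rightarrow> (nat \<Rightarrow> real)" where
  "TT a b x u = (\<lambda>n. jacobi_op a b u n - x * u n)"

lemma jop_diff: "jacobi_op a b (\<lambda>n. u n - v n) = (\<lambda>n. jacobi_op a b u n - jacobi_op a b v n)"
  by (auto simp: jacobi_op_def algebra_simps)
lemma jop_add: "jacobi_op a b (\<lambda>n. u n + v n) = (\<lambda>n. jacobi_op a b u n + jacobi_op a b v n)"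
  by (auto simp: jacobi_op_def algebra_simps)
lemma jop_scale: "jacobi_op a b (\<lambda>n. k * u n) = (\<lambda>n. k * jacobi_op a b u n)"
  by (auto simp: jacobi_op_def algebra_simps)
lemma jop_sum: "finite S \<Longrightarrow> jacobi_op a b (\<lambda>n. \<Sum>k\<in>S. w k n) = (\<lambda>n. \<Sum>k\<in>S. jacobi_op a b (w k) n)"
  by (induction S rule: finite_induct) (auto simp: jacobi_op_def algebra_simps sum.distrib sum_distrib_left)
lemma TT_diff: "TT a b x (\<lambda>n. u n - v n) = (\<lambda>n. TT a b x u n - TT a b x v n)"
  by (auto simp: TT_def jacobi_op_def algebra_simps)
lemma TT_sum: "finite S \<Longrightarrow> TT a b x (\<lambda>n. \<Sum>k\<in>S. w k n) = (\<lambda>n. \<Sum>k\<in>S. TT a b x (w k) n)"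
  by (simp add: TT_def jop_sum sum_subtractf sum_distrib_left)

lemma jop_local:
  assumes "\<And>n. (\<lambda>k. w k n) \<longlonglongrightarrow> W n"
  shows "(\<lambda>k. jacobi_op a b (w k) n) \<longlonglongrightarrow> jacobi_op a b W n"
  unfolding jacobi_op_def by (auto intro!: tendsto_intros assms)

lemma jop_eq_local:
  assumes "\<And>m. m \<le> n + 1 \<Longrightarrow> u m = v m"
  shows "jacobi_op a b u n = jacobi_op a b v n"
  using assms by (auto simp: jacobi_op_def)

lemma sq3: "((x::real) + y + z)\<^sup>2 \<le> 3 * (x\<^sup>2 + y\<^sup>2 + z\<^sup>2)"
proof -
  have "0 \<le> (x-y)\<^sup>2+(y-z)\<^sup>2+(x-z)\<^sup>2" by simp
  then show ?thesis by (simp add: power2_eq_square algebra_simps)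
qed

locale jac =
  fixes a b :: "nat \<Rightarrow> real" and c C B :: real
  assumes cpos: "0 < c" and alow: "\<And>n. 1 \<le> n \<Longrightarrow> c \<le> a n"
    and aup: "\<And>n. 1 \<le> n \<Longrightarrow> a n \<le> C" and bbd: "\<And>n. 1 \<le> n \<Longrightarrow> \<bar>b n\<bar> \<le> B"
begin

lemma apos: "1 \<le> n \<Longrightarrow> 0 < a n" using alow cpos by force
lemma anz: "1 \<le> n \<Longrightarrow> a n \<noteq> 0" using apos by force
lemma Cpos: "0 < C" using alow[of 1] aup[of 1] cpos by simp
lemma Bnn: "0 \<le> B" using bbd[of 1] by simp
lemma aabs: "1 \<le> n \<Longrightarrow> \<bar>a n\<bar> \<le> C" using apos aup by force

lemma p_rec1: "a 1 * opoly a b 1 x = x - b 1"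
  using anz[of 1] by simp
lemma p_rec: "a (n + 2) * opoly a b (n + 2) x = (x - b (n + 2)) * opoly a b (n + 1) x - a (n + 1) * opoly a b n x"
proof -
  have "opoly a b (Suc (Suc n)) x = ((x - b (n + 2)) * opoly a b (Suc n) x - a (n + 1) * opoly a b n x) / a (n + 2)"
    by simp
  then show ?thesis using anz[of "n+2"] by (simp add: field_simps)
qed

lemma PP_eig: "jacobi_op a b (PP a b x) = (\<lambda>n. x * PP a b x n)"
proof
  fix n
  show "jacobi_op a b (PP a b x) n = x * PP a b x n"
  proof (cases n)
    case 0 then show ?thesis by (simp add: jacobi_op_def PP_def)
  next
    case (Suc m)
    show ?thesis
    proof (cases m)
      case 0 then show ?thesis using Suc p_rec1[of x] by (simp add: jacobi_op_def PP_def)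
    next
      case (Suc k)
      have "a (k + 2) * opoly a b (k + 2) x = (x - b (k + 2)) * opoly a b (k + 1) x - a (k + 1) * opoly a b k x"
        by (rule p_rec)
      then show ?thesis using \<open>n = Suc m\<close> Suc
        by (simp add: jacobi_op_def PP_def algebra_simps)
    qed
  qed
qed

lemma eig_unique:
  assumes "u 0 = 0" "\<And>n. 1 \<le> n \<Longrightarrow> jacobi_op a b u n = x * u n"
  shows "u = (\<lambda>n. u 1 * PP a b x n)"
proof -
  have H: "u n = u 1 * PP a b x n \<and> u (n+1) = u 1 * PP a b x (n+1)" for n
  proof (induction n)
    case 0 then show ?case using assms(1) by (simp add: PP_def)
  next
    case (Suc n)
    have e1: "a n * u n + b (n+1) * u (n+1) + a (n+1) * u (n+2) = x * u (n+1)"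
      using assms(2)[of "n+1"] by (simp add: jacobi_op_def)
    have e2: "a n * PP a b x n + b (n+1) * PP a b x (n+1) + a (n+1) * PP a b x (n+2) = x * PP a b x (n+1)"
      using fun_cong[OF PP_eig[of x], of "n+1"] by (simp add: jacobi_op_def)
    have "a (n+1) * u (n+2) = a (n+1) * (u 1 * PP a b x (n+2))"
    proof -
      have "a (n+1) * u (n+2) = x * u (n+1) - a n * u n - b (n+1) * u (n+1)" using e1 by simp
      also have "\<dots> = u 1 * (x * PP a b x (n+1) - a n * PP a b x n - b (n+1) * PP a b x (n+1))"
        using Suc.IH by (simp add: algebra_simps)
      also have "\<dots> = a (n+1) * (u 1 * PP a b x (n+2))"
        using arg_cong[OF e2, of "\<lambda>t. u 1 * t"] by (simp add: algebra_simps)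
      finally show ?thesis .
    qed
    then have "u (n+2) = u 1 * PP a b x (n+2)" using anz[of "n+1"] by simp
    then show ?case using Suc.IH by simp
  qed
  show ?thesis by (rule ext, rule conjunct1[OF H])
qed

lemma PP_1: "PP a b x 1 = 1" by (simp add: PP_def)

definition Jn where "Jn = sqrt (3 * (2 * C\<^sup>2 + B\<^sup>2))"

lemma Jn_nonneg: "0 \<le> Jn" by (simp add: Jn_def)

lemma jop_bound:
  assumes "sm u" "u 0 = 0"
  shows "sm (jacobi_op a b u)" "nr (jacobi_op a b u) \<le> Jn * nr u"
proof -
  define g where "g n = (if n = 0 then 0 else (u (n - 1))\<^sup>2)" for n
  have pt: "(jacobi_op a b u n)\<^sup>2 \<le> 3 * (C\<^sup>2 * g n + B\<^sup>2 * (u n)\<^sup>2 + C\<^sup>2 * (u (n+1))\<^sup>2)" for n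
  proof (cases "n = 0")
    case True then show ?thesis by (simp add: jacobi_op_def g_def)
  next
    case False
    have h1: "\<bar>a (n-1) * u (n-1)\<bar> \<le> C * \<bar>u (n-1)\<bar>"
    proof (cases "n - 1 = 0")
      case True then show ?thesis using assms(2) by simp
    next
      case False then show ?thesis using aabs[of "n-1"] Cpos
        by (simp add: abs_mult mult_right_mono)
    qed
    have h2: "\<bar>b n * u n\<bar> \<le> B * \<bar>u n\<bar>" using bbd[of n] False by (simp add: abs_mult mult_right_mono)
    have h3: "\<bar>a n * u (n+1)\<bar> \<le> C * \<bar>u (n+1)\<bar>" using aabs[of n] False by (simp add: abs_mult mult_right_mono)
    have "(jacobi_op a b u n)\<^sup>2 = (a (n-1) * u (n-1) + b n * u n + a n * u (n+1))\<^sup>2"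
      using False by (simp add: jacobi_op_def)
    also have "\<dots> \<le> 3 * ((a (n-1) * u (n-1))\<^sup>2 + (b n * u n)\<^sup>2 + (a n * u (n+1))\<^sup>2)"
      by (rule sq3)
    also have "\<dots> \<le> 3 * ((C * u (n-1))\<^sup>2 + (B * u n)\<^sup>2 + (C * u (n+1))\<^sup>2)"
    proof -
      have "(a (n-1) * u (n-1))\<^sup>2 \<le> (C * u (n-1))\<^sup>2"
        using h1 by (metis abs_ge_zero abs_mult abs_of_pos Cpos power2_abs power_mono)
      moreover have "(b n * u n)\<^sup>2 \<le> (B * u n)\<^sup>2"
        using h2 Bnn by (metis abs_ge_zero abs_mult abs_of_nonneg power2_abs power_mono)
      moreover have "(a n * u (n+1))\<^sup>2 \<le> (C * u (n+1))\<^sup>2"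
        using h3 by (metis abs_ge_zero abs_mult abs_of_pos Cpos power2_abs power_mono)
      ultimately show ?thesis by simp
    qed
    finally show ?thesis using False by (simp add: g_def power_mult_distrib)
  qed
  have sg: "(\<Sum>n<N. g n) \<le> sq u" for N
  proof -
    have "(\<Sum>n<N. g n) \<le> (\<Sum>n<Suc N. g n)" by (simp add: g_def)
    also have "\<dots> = (\<Sum>n<N. (u n)\<^sup>2)" by (subst sum.lessThan_Suc_shift) (simp add: g_def)
    also have "\<dots> \<le> sq u" by (rule psum_le_sq[OF finite_lessThan assms(1)])
    finally show ?thesis .
  qed
  have s1: "(\<Sum>n<N. (u (n+1))\<^sup>2) \<le> sq u" for N
  proof -
    have "(\<Sum>n<N. (u (n+1))\<^sup>2) = (\<Sum>n<Suc N. (u n)\<^sup>2)" by (subst sum.lessThan_Suc_shift) (simp add: assms(2))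
    also have "\<dots> \<le> sq u" by (rule psum_le_sq[OF finite_lessThan assms(1)])
    finally show ?thesis .
  qed
  have PB: "(\<Sum>n<N. (jacobi_op a b u n)\<^sup>2) \<le> (Jn * nr u)\<^sup>2" for N
  proof -
    have "(\<Sum>n<N. (jacobi_op a b u n)\<^sup>2) \<le> (\<Sum>n<N. 3 * (C\<^sup>2 * g n + B\<^sup>2 * (u n)\<^sup>2 + C\<^sup>2 * (u (n+1))\<^sup>2))"
      by (rule sum_mono) (rule pt)
    also have "\<dots> = 3 * (C\<^sup>2 * (\<Sum>n<N. g n) + B\<^sup>2 * (\<Sum>n<N. (u n)\<^sup>2) + C\<^sup>2 * (\<Sum>n<N. (u (n+1))\<^sup>2))"
      by (simp add: sum.distrib sum_distrib_left)
    also have "\<dots> \<le> 3 * (C\<^sup>2 * sq u + B\<^sup>2 * sq u + C\<^sup>2 * sq u)"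
      using sg s1 psum_le_sq[of "{..<N}" u] assms(1)
      by (intro mult_left_mono add_mono) auto
    also have "\<dots> = (Jn * nr u)\<^sup>2" by (simp add: Jn_def power_mult_distrib nr_sq algebra_simps)
    finally show ?thesis .
  qed
  from psum_bound[OF PB] show "sm (jacobi_op a b u)" by blast
  from psum_bound[OF PB] have "sq (jacobi_op a b u) \<le> (Jn * nr u)\<^sup>2" by blast
  then show "nr (jacobi_op a b u) \<le> Jn * nr u"
  proof -
    have nn: "0 \<le> Jn * nr u" using Jn_nonneg nr_nonneg by simp
    have "nr (jacobi_op a b u) \<le> sqrt ((Jn * nr u)\<^sup>2)" unfolding nr_def[of "jacobi_op a b u"]
      by (rule real_sqrt_le_mono) fact
    then show ?thesis using nn by simp
  qed
qed

lemma TT_bound: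
  assumes "sm u" "u 0 = 0"
  shows "sm (TT a b x u)" "nr (TT a b x u) \<le> (Jn + \<bar>x\<bar>) * nr u" "TT a b x u 0 = 0"
proof -
  have *: "TT a b x u = (\<lambda>n. jacobi_op a b u n - x * u n)" by (simp add: TT_def)
  show "sm (TT a b x u)" unfolding * using jop_bound[OF assms] nr_scale[where k=x and u=u] assms nr_diff by blast
  have "nr (TT a b x u) \<le> nr (jacobi_op a b u) + nr (\<lambda>n. x * u n)"
    unfolding * using jop_bound[OF assms] nr_scale[where k=x and u=u] assms nr_diff by blast
  also have "\<dots> \<le> Jn * nr u + \<bar>x\<bar> * nr u" using jop_bound[OF assms] nr_scale(1) by simp
  finally show "nr (TT a b x u) \<le> (Jn + \<bar>x\<bar>) * nr u" by (simp add: algebra_simps)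
  show "TT a b x u 0 = 0" using assms by (simp add: TT_def jacobi_op_def)
qed

lemma TT_l2: "u \<in> l2_half \<Longrightarrow> TT a b x u \<in> l2_half"
  using TT_bound by (auto simp: l2_half_sm)

end


lemma l2_diff: "u \<in> l2_half \<Longrightarrow> v \<in> l2_half \<Longrightarrow> (\<lambda>n. u n - v n) \<in> l2_half"
  using nr_diff(1) by (auto simp: l2_half_sm)
lemma l2_add: "u \<in> l2_half \<Longrightarrow> v \<in> l2_half \<Longrightarrow> (\<lambda>n. u n + v n) \<in> l2_half"
  using nr_add(1) by (auto simp: l2_half_sm)
lemma l2_scale: "u \<in> l2_half \<Longrightarrow> (\<lambda>n. k * u n) \<in> l2_half"
  using nr_scale(2) by (auto simp: l2_half_sm)
lemma l2_zero: "(\<lambda>n. 0) \<in> l2_half" by (simp add: l2_half_sm)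

lemma nr_sum: assumes "\<And>i. i \<in> S \<Longrightarrow> sm (d i)" "finite S"
  shows "sm (\<lambda>n. \<Sum>i\<in>S. d i n) \<and> nr (\<lambda>n. \<Sum>i\<in>S. d i n) \<le> (\<Sum>i\<in>S. nr (d i))"
  using assms(2,1)
proof (induction S rule: finite_induct)
  case empty then show ?case by simp
next
  case (insert x F)
  have e: "(\<lambda>n. \<Sum>i\<in>insert x F. d i n) = (\<lambda>n. d x n + (\<Sum>i\<in>F. d i n))"
    using insert by simp
  have s1: "sm (d x)" using insert by simp
  have s2: "sm (\<lambda>n. \<Sum>i\<in>F. d i n)" "nr (\<lambda>n. \<Sum>i\<in>F. d i n) \<le> (\<Sum>i\<in>F. nr (d i))"
    using insert by auto
  show ?case unfolding e using nr_add[OF s1 s2(1)] s2(2) insert by simp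
qed

lemma GP:
  fixes A Bo :: "(nat \<Rightarrow> real) \<Rightarrow> (nat \<Rightarrow> real)"
  assumes Al2: "\<And>u. u \<in> l2_half \<Longrightarrow> A u \<in> l2_half"
    and Bl2: "\<And>u. u \<in> l2_half \<Longrightarrow> Bo u \<in> l2_half"
    and Alin: "\<And>u v. A (\<lambda>n. u n - v n) = (\<lambda>n. A u n - A v n)"
    and Blin: "\<And>u v. Bo (\<lambda>n. u n - v n) = (\<lambda>n. Bo u n - Bo v n)"
    and Alow: "\<And>u. u \<in> l2_half \<Longrightarrow> cc * nr u \<le> nr (A u)"
    and Abij: "bij_betw A l2_half l2_half"
    and Bup: "\<And>u. u \<in> l2_half \<Longrightarrow> nr (Bo u) \<le> q * nr u"
    and q: "0 \<le> q" "q < cc"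
    and Aloc: "\<And>w W n. (\<And>n. (\<lambda>k. w k n) \<longlonglongrightarrow> W n) \<Longrightarrow> (\<lambda>k. A (w k) n) \<longlonglongrightarrow> A W n"
    and Bloc: "\<And>w W n. (\<And>n. (\<lambda>k. w k n) \<longlonglongrightarrow> W n) \<Longrightarrow> (\<lambda>k. Bo (w k) n) \<longlonglongrightarrow> Bo W n"
  shows "bij_betw (\<lambda>u. \<lambda>n. A u n + Bo u n) l2_half l2_half"
proof -
  have cc: "0 < cc" using q by simp
  define M where "M u = (\<lambda>n. A u n + Bo u n)" for u
  have Ml2: "u \<in> l2_half \<Longrightarrow> M u \<in> l2_half" for u unfolding M_def using Al2 Bl2 l2_add by blast
  have inj: "inj_on M l2_half"
  proof (rule inj_onI)
    fix u v assume uv: "u \<in> l2_half" "v \<in> l2_half" "M u = M v"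
    define d where "d = (\<lambda>n. u n - v n)"
    have dl: "d \<in> l2_half" unfolding d_def using uv l2_diff by blast
    have "A d = (\<lambda>n. - Bo d n)"
    proof
      fix n
      have "A u n + Bo u n = A v n + Bo v n" using fun_cong[OF uv(3), of n] by (simp add: M_def)
      then show "A d n = - Bo d n" unfolding d_def Alin Blin by simp
    qed
    then have "nr (A d) = nr (Bo d)" using sm_minus(2) by simp
    then have "cc * nr d \<le> q * nr d" using Alow[OF dl] Bup[OF dl] by simp
    then have "(cc - q) * nr d \<le> 0" by (simp add: left_diff_distrib)
    moreover have "0 < cc - q" using q by simp
    ultimately have "nr d \<le> 0" by (simp add: mult_le_0_iff)
    then have "nr d = 0" using nr_nonneg[of d] by linarith
    then have "d = (\<lambda>n. 0)" using nr_zero dl by (auto simp: l2_half_sm)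
    then show "u = v" unfolding d_def by (simp add: fun_eq_iff)
  qed
  have surj: "\<exists>W\<in>l2_half. M W = f" if f: "f \<in> l2_half" for f
  proof -
    define S where "S = the_inv_into l2_half A"
    have S: "g \<in> l2_half \<Longrightarrow> S g \<in> l2_half \<and> A (S g) = g" for g
      unfolding S_def using Abij
      by (metis bij_betw_def bij_betw_the_inv_into f_the_inv_into_f bij_betwE)
    define w where "w = rec_nat (\<lambda>n. 0) (\<lambda>k wk. S (\<lambda>n. f n - Bo wk n))"
    have w0: "w 0 = (\<lambda>n. 0)" and wS: "w (Suc k) = S (\<lambda>n. f n - Bo (w k) n)" for k
      by (simp_all add: w_def)
    have wl: "w k \<in> l2_half" for k
      by (induction k) (auto simp: w0 wS l2_zero intro!: S[THEN conjunct1] l2_diff f Bl2)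
    have wA: "A (w (Suc k)) = (\<lambda>n. f n - Bo (w k) n)" for k
      unfolding wS using S[of "\<lambda>n. f n - Bo (w k) n"] l2_diff[OF f Bl2[OF wl]] by blast
    define d where "d k = (\<lambda>n. w (Suc k) n - w k n)" for k
    have dl: "d k \<in> l2_half" for k unfolding d_def using wl l2_diff by blast
    define r where "r = q / cc"
    have r: "0 \<le> r" "r < 1" using q cc by (auto simp: r_def)
    have dstep: "nr (d (Suc k)) \<le> r * nr (d k)" for k
    proof -
      have "A (d (Suc k)) = (\<lambda>n. - Bo (d k) n)"
        unfolding d_def Alin Blin wA by (auto simp: algebra_simps)
      then have "cc * nr (d (Suc k)) \<le> q * nr (d k)" using Alow[OF dl] Bup[OF dl] sm_minus(2)
        by (metis order_trans)
      then show ?thesis using cc by (simp add: r_def field_simps)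
    qed
    define D where "D = nr (d 0)"
    have dgeo: "nr (d k) \<le> r ^ k * D" for k
    proof (induction k)
      case 0 then show ?case by (simp add: D_def)
    next
      case (Suc k)
      have "nr (d (Suc k)) \<le> r * nr (d k)" by (rule dstep)
      also have "\<dots> \<le> r * (r ^ k * D)" using Suc r by (intro mult_left_mono) auto
      finally show ?case by simp
    qed
    have dsm: "sm (d k)" for k using dl by (simp add: l2_half_sm)
    have wsum: "w k = (\<lambda>n. \<Sum>i<k. d i n)" for k
      by (induction k) (auto simp: w0 d_def)
    have summ: "summable (\<lambda>i. d i n)" for n
    proof (rule summable_comparison_test')
      show "summable (\<lambda>i. r ^ i * D)" using r by (intro summable_mult2 summable_geometric) auto
      show "norm (d i n) \<le> r ^ i * D" for i using coord_le_nr[OF dsm, of i n] dgeo[of i] by simp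
    qed
    define W where "W n = (\<Sum>i. d i n)" for n
    have wconv: "(\<lambda>k. w k n) \<longlonglongrightarrow> W n" for n
      unfolding wsum W_def by (rule summable_LIMSEQ[OF summ])
    define R where "R = D / (1 - r)"
    have wnr: "nr (w k) \<le> R" for k
    proof -
      have "nr (w k) \<le> (\<Sum>i<k. nr (d i))" unfolding wsum using nr_sum[of "{..<k}" d] dsm by simp
      also have "\<dots> \<le> (\<Sum>i<k. r ^ i * D)" by (rule sum_mono) (rule dgeo)
      also have "\<dots> \<le> R" unfolding R_def
      proof -
        have "(\<Sum>i<k. r ^ i * D) = (\<Sum>i<k. r ^ i) * D" by (simp add: sum_distrib_right)
        also have "\<dots> \<le> (1 / (1 - r)) * D"
        proof (rule mult_right_mono)
          show "0 \<le> D" by (simp add: D_def nr_nonneg)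
          have "(\<Sum>i<k. r ^ i) \<le> (\<Sum>i. r ^ i)"
            using r by (intro sum_le_suminf summable_geometric) auto
          then show "(\<Sum>i<k. r ^ i) \<le> 1 / (1 - r)" using r suminf_geometric[of r] by simp
        qed
        finally show "(\<Sum>i<k. r ^ i * D) \<le> D / (1 - r)" by simp
      qed
      finally show ?thesis .
    qed
    have Wps: "(\<Sum>n<N. (W n)\<^sup>2) \<le> R\<^sup>2" for N
    proof (rule LIMSEQ_le_const2)
      show "(\<lambda>k. \<Sum>n<N. (w k n)\<^sup>2) \<longlonglongrightarrow> (\<Sum>n<N. (W n)\<^sup>2)"
        by (intro tendsto_sum tendsto_power wconv)
      show "\<exists>N0. \<forall>k\<ge>N0. (\<Sum>n<N. (w k n)\<^sup>2) \<le> R\<^sup>2"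
      proof (intro exI allI impI)
        fix k
        have sw: "sm (w k)" using wl by (simp add: l2_half_sm)
        have "(\<Sum>n<N. (w k n)\<^sup>2) \<le> sq (w k)" by (rule psum_le_sq[OF finite_lessThan sw])
        also have "\<dots> = (nr (w k))\<^sup>2" by (simp add: nr_sq)
        also have "\<dots> \<le> R\<^sup>2" using wnr[of k] nr_nonneg by (intro power_mono) auto
        finally show "(\<Sum>n<N. (w k n)\<^sup>2) \<le> R\<^sup>2" .
      qed
    qed
    have Wsm: "sm W" using psum_bound(1)[OF Wps] .
    have W0: "W 0 = 0"
    proof -
      have "(\<lambda>k. w k 0) \<longlonglongrightarrow> 0" using wl by (simp add: l2_half_sm)
      then show ?thesis using wconv[of 0] LIMSEQ_unique by blast
    qed
    have Wl: "W \<in> l2_half" using Wsm W0 by (simp add: l2_half_sm)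
    have "M W = f"
    proof
      fix n
      have t1: "(\<lambda>k. A (w (Suc k)) n) \<longlonglongrightarrow> A W n"
        by (rule Aloc) (rule LIMSEQ_Suc[OF wconv])
      have t2: "(\<lambda>k. Bo (w k) n) \<longlonglongrightarrow> Bo W n" by (rule Bloc) (rule wconv)
      have "(\<lambda>k. A (w (Suc k)) n + Bo (w k) n) \<longlonglongrightarrow> A W n + Bo W n" by (intro tendsto_add t1 t2)
      moreover have "(\<lambda>k. A (w (Suc k)) n + Bo (w k) n) = (\<lambda>k. f n)" using wA by simp
      ultimately have "A W n + Bo W n = f n" using LIMSEQ_unique tendsto_const by metis
      then show "M W n = f n" by (simp add: M_def)
    qed
    then show ?thesis using Wl by blast
  qed
  show ?thesis unfolding bij_betw_def
    using inj surj Ml2 unfolding M_def by (auto simp: image_def)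
qed



lemma extract_conv:
  fixes F :: "nat \<Rightarrow> 'a::countable \<Rightarrow> real"
  assumes "\<And>j k. \<bar>F j k\<bar> \<le> R k"
  shows "\<exists>r. strict_mono r \<and> (\<forall>k. convergent (\<lambda>j. F (r j) k))"
proof -
  let ?S = "PiE UNIV (\<lambda>k. cball (0::real) (R k))"
  have "compactin (product_topology (\<lambda>_. euclidean) UNIV) ?S"
    by (subst compactin_PiE) auto
  hence "compact ?S" by (simp add: euclidean_product_topology)
  hence "seq_compact ?S" by (rule compact_imp_seq_compact)
  moreover have "\<forall>j. F j \<in> ?S" using assms by (auto simp: dist_real_def)
  ultimately obtain l r where "strict_mono r" "(F \<circ> r) \<longlonglongrightarrow> l"
    unfolding seq_compact_def by metis
  moreover have "\<And>k. (\<lambda>j. F (r j) k) \<longlonglongrightarrow> l k"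
  proof -
    fix k
    have "continuous_on UNIV (\<lambda>f::'a\<Rightarrow>real. f k)" by (simp add: continuous_on_product_coordinates)
    then show "(\<lambda>j. F (r j) k) \<longlonglongrightarrow> l k"
      using \<open>(F \<circ> r) \<longlonglongrightarrow> l\<close> continuous_on_tendsto_compose[of UNIV "\<lambda>f. f k"] by (auto simp: o_def)
  qed
  ultimately show ?thesis unfolding convergent_def by blast
qed

lemma TT_scale: "TT a b x (\<lambda>n. k * u n) = (\<lambda>n. k * TT a b x u n)"
  by (auto simp: TT_def jacobi_op_def algebra_simps)

lemma TT_local:
  assumes "\<And>n. (\<lambda>k. w k n) \<longlonglongrightarrow> W n"
  shows "(\<lambda>k. TT a b x (w k) n) \<longlonglongrightarrow> TT a b x W n"
  unfolding TT_def by (intro tendsto_intros jop_local assms)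

lemma sum_sq_small:
  fixes w :: "nat \<Rightarrow> nat \<Rightarrow> real"
  assumes "\<And>n. (\<lambda>k. w k n) \<longlonglongrightarrow> 0"
  shows "(\<lambda>k. \<Sum>n<L. (w k n)\<^sup>2) \<longlonglongrightarrow> 0"
proof -
  have "(\<lambda>k. \<Sum>n<L. (w k n)\<^sup>2) \<longlonglongrightarrow> (\<Sum>n<L. 0\<^sup>2)" by (intro tendsto_intros assms)
  then show ?thesis by simp
qed

context jac
begin

lemma P_not_l2:
  assumes bij: "bij_betw (TT a b x) l2_half l2_half"
  shows "\<not> sm (PP a b x)"
proof
  assume sP: "sm (PP a b x)"
  have Pl: "PP a b x \<in> l2_half" using sP by (simp add: l2_half_sm PP_def)
  have "TT a b x (PP a b x) = TT a b x (\<lambda>n. 0)"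
    using PP_eig[of x] by (auto simp: TT_def jacobi_op_def fun_eq_iff)
  then have "PP a b x = (\<lambda>n. 0)" using bij Pl l2_zero unfolding bij_betw_def inj_on_def by blast
  then have "PP a b x 1 = 0" by simp
  then show False using PP_1[of x] by simp
qed

lemma escape:
  assumes bij: "bij_betw (TT a b x) l2_half l2_half"
    and NB: "\<And>e. e > 0 \<Longrightarrow> \<exists>u\<in>l2_half. nr (TT a b x u) < e * nr u"
    and dpos: "0 < \<delta>"
  shows "\<exists>u R. u \<in> l2_half \<and> (\<forall>n. u n \<noteq> 0 \<longrightarrow> L \<le> n \<and> n \<le> R) \<and> 1/4 \<le> sq u \<and> nr (TT a b x u) \<le> \<delta>"
proof -
  have "\<exists>v. v \<in> l2_half \<and> nr v = 1 \<and> nr (TT a b x v) \<le> 1 / (real k + 1)" for k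
  proof -
    obtain u where u: "u \<in> l2_half" "nr (TT a b x u) < (1 / (real k + 1)) * nr u"
      using NB[of "1 / (real k + 1)"] by auto
    have nu: "0 < nr u" using u(2) nr_nonneg[of u] nr_nonneg[of "TT a b x u"]
      by (metis less_eq_real_def mult_zero_right not_le)
    define v where "v = (\<lambda>n. (1 / nr u) * u n)"
    have "v \<in> l2_half" unfolding v_def using u(1) l2_scale by blast
    moreover have "nr v = 1" unfolding v_def nr_scale(1) using nu by simp
    moreover have "nr (TT a b x v) = nr (TT a b x u) / nr u"
      unfolding v_def TT_scale nr_scale(1) using nu by simp
    moreover have "nr (TT a b x u) / nr u \<le> 1 / (real k + 1)" using u(2) nu by (simp add: divide_le_eq)
    ultimately show ?thesis by auto
  qed
  then obtain v where v: "\<And>k. v k \<in> l2_half" "\<And>k. nr (v k) = 1"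
    "\<And>k. nr (TT a b x (v k)) \<le> 1 / (real k + 1)" by metis
  have vsm: "sm (v k)" for k using v(1) by (simp add: l2_half_sm)
  have vb: "\<bar>v k n\<bar> \<le> 1" for k n using coord_le_nr[OF vsm] v(2) by metis
  obtain r where r: "strict_mono r" "\<And>n. convergent (\<lambda>j. v (r j) n)"
    using extract_conv[of v "\<lambda>_. 1"] vb by blast
  define V where "V n = lim (\<lambda>j. v (r j) n)" for n
  have Vc: "(\<lambda>j. v (r j) n) \<longlonglongrightarrow> V n" for n using r(2) by (simp add: V_def convergent_LIMSEQ_iff)
  have TTV: "TT a b x V n = 0" for n
  proof -
    have t1: "(\<lambda>j. TT a b x (v (r j)) n) \<longlonglongrightarrow> TT a b x V n" by (rule TT_local) (rule Vc)
    have "(\<lambda>j. TT a b x (v (r j)) n) \<longlonglongrightarrow> 0"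
    proof (rule Lim_null_comparison)
      show "(\<lambda>j. inverse (real (Suc j))) \<longlonglongrightarrow> 0" by (rule LIMSEQ_inverse_real_of_nat)
      show "\<forall>\<^sub>F j in sequentially. norm (TT a b x (v (r j)) n) \<le> inverse (real (Suc j))"
      proof (intro always_eventually allI)
        fix j
        have "norm (TT a b x (v (r j)) n) \<le> nr (TT a b x (v (r j)))"
          using coord_le_nr TT_bound(1) vsm v(1) by (simp add: l2_half_sm)
        also have "\<dots> \<le> 1 / (real (r j) + 1)" by (rule v(3))
        also have "\<dots> \<le> inverse (real (Suc j))" using seq_suble[OF r(1), of j]
          by (simp add: inverse_eq_divide frac_le)
        finally show "norm (TT a b x (v (r j)) n) \<le> inverse (real (Suc j))" .
      qed
    qed
    then show ?thesis using t1 LIMSEQ_unique by blast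
  qed
  have V0: "V 0 = 0" using Vc[of 0] v(1) by (simp add: l2_half_sm LIMSEQ_const_iff)
  have Vps: "(\<Sum>n<N. (V n)\<^sup>2) \<le> 1" for N
  proof (rule LIMSEQ_le_const2)
    show "(\<lambda>j. \<Sum>n<N. (v (r j) n)\<^sup>2) \<longlonglongrightarrow> (\<Sum>n<N. (V n)\<^sup>2)" by (intro tendsto_intros Vc)
    show "\<exists>N0. \<forall>j\<ge>N0. (\<Sum>n<N. (v (r j) n)\<^sup>2) \<le> 1"
      using psum_le_sq[OF finite_lessThan vsm] v(2) nr_sq by (metis one_power2)
  qed
  have Vsm: "sm V" using psum_bound(1)[OF Vps] .
  have Veq: "V = (\<lambda>n. V 1 * PP a b x n)"
    by (rule eig_unique) (use V0 TTV in \<open>auto simp: TT_def\<close>)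
  have V10: "V 1 = 0"
  proof (rule ccontr)
    assume h: "V 1 \<noteq> 0"
    have "PP a b x = (\<lambda>n. (1 / V 1) * V n)" using h by (subst Veq) auto
    then have "sm (PP a b x)" using nr_scale(2)[OF Vsm, of "1 / V 1"] by simp
    then show False using P_not_l2[OF bij] by simp
  qed
  have vz: "(\<lambda>j. v (r j) n) \<longlonglongrightarrow> 0" for n using Vc[of n] Veq V10 by (metis mult_zero_left)
  define K0 where "K0 = Jn + \<bar>x\<bar>"
  have K0: "0 \<le> K0" using Jn_nonneg by (simp add: K0_def)
  define \<tau> where "\<tau> = min (1/4) (\<delta> / (3 * (K0 + 1)))"
  have tau: "0 < \<tau>" "\<tau> \<le> 1/4" "K0 * \<tau> \<le> \<delta> / 3" 
  proof -
    show "0 < \<tau>" using dpos K0 by (simp add: \<tau>_def)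
    show "\<tau> \<le> 1/4" unfolding \<tau>_def by (rule min.cobounded1)
    have "K0 * \<tau> \<le> K0 * (\<delta> / (3 * (K0 + 1)))" using K0 by (intro mult_left_mono) (auto simp: \<tau>_def)
    also have "\<dots> \<le> \<delta> / 3" using K0 dpos by (simp add: field_simps)
    finally show "K0 * \<tau> \<le> \<delta> / 3" .
  qed
  have ev1: "\<forall>\<^sub>F j in sequentially. (\<Sum>n<L. (v (r j) n)\<^sup>2) < \<tau>\<^sup>2"
    using sum_sq_small[of "\<lambda>j n. v (r j) n" L, OF vz] tau(1) by (simp add: order_tendsto_iff)
  have ev2: "\<forall>\<^sub>F j in sequentially. 1 / (real (r j) + 1) \<le> \<delta> / 3"
  proof -
    obtain M :: nat where M: "3 / \<delta> < M" using reals_Archimedean2 by blast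
    show ?thesis
    proof (rule eventually_sequentiallyI[of M])
      fix j assume "M \<le> j"
      then have "real M \<le> real (r j)" using seq_suble[OF r(1), of j] by simp
      then have "3 / \<delta> < real (r j) + 1" using M by simp
      then show "1 / (real (r j) + 1) \<le> \<delta> / 3" using dpos
        by (simp add: field_simps)
    qed
  qed
  obtain j where j1: "(\<Sum>n<L. (v (r j) n)\<^sup>2) < \<tau>\<^sup>2" and j2: "1 / (real (r j) + 1) \<le> \<delta> / 3"
  proof -
    from eventually_conj[OF ev1 ev2] obtain M where "\<And>j. j \<ge> M \<Longrightarrow> (\<Sum>n<L. (v (r j) n)\<^sup>2) < \<tau>\<^sup>2 \<and> 1 / (real (r j) + 1) \<le> \<delta> / 3"
      unfolding eventually_sequentially by blast
    then show ?thesis using that by blast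
  qed
  define w where "w = v (r j)"
  have wl: "w \<in> l2_half" and wsm: "sm w" and wnr: "nr w = 1" unfolding w_def using v vsm by auto
  have wT: "nr (TT a b x w) \<le> \<delta> / 3" unfolding w_def using v(3)[of "r j"] j2 by linarith
  have "(\<lambda>N. \<Sum>n<N. (w n)\<^sup>2) \<longlonglongrightarrow> sq w"
    using wsm unfolding sq_def sm_def by (simp add: summable_LIMSEQ)
  then have "\<forall>\<^sub>F N in sequentially. sq w - \<tau>\<^sup>2 < (\<Sum>n<N. (w n)\<^sup>2)"
    using tau(1) by (simp add: order_tendsto_iff)
  then obtain N1 where N1: "\<And>N. N \<ge> N1 \<Longrightarrow> sq w - \<tau>\<^sup>2 < (\<Sum>n<N. (w n)\<^sup>2)"
    unfolding eventually_sequentially by blast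
  define N0 where "N0 = max N1 L"
  have N0: "sq w - \<tau>\<^sup>2 < (\<Sum>n<N0. (w n)\<^sup>2)" "L \<le> N0" using N1 by (auto simp: N0_def)
  define lo where "lo n = (if n < L then w n else 0)" for n
  define hi where "hi n = (if N0 \<le> n then w n else 0)" for n
  define u where "u n = (if L \<le> n \<and> n < N0 then w n else 0)" for n
  have ueq: "u = (\<lambda>n. w n - lo n - hi n)" using N0(2) by (auto simp: u_def lo_def hi_def)
  have w0: "w 0 = 0" using wl by (simp add: l2_half_sm)
  have lops: "(\<Sum>n<N. (lo n)\<^sup>2) \<le> \<tau>\<^sup>2" for N
  proof -
    have "(\<Sum>n<N. (lo n)\<^sup>2) = (\<Sum>n\<in>{..<N} \<inter> {..<L}. (w n)\<^sup>2)"
      unfolding lo_def by (rule sum.mono_neutral_cong_right) auto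
    also have "\<dots> \<le> (\<Sum>n<L. (w n)\<^sup>2)" by (rule sum_mono2) auto
    finally show ?thesis using j1 w_def by simp
  qed
  have hips: "(\<Sum>n<N. (hi n)\<^sup>2) \<le> \<tau>\<^sup>2" for N
  proof (cases "N \<le> N0")
    case True
    then have "(\<Sum>n<N. (hi n)\<^sup>2) = 0" by (auto simp: hi_def intro!: sum.neutral)
    then show ?thesis by simp
  next
    case False
    have "(\<Sum>n<N. (hi n)\<^sup>2) = (\<Sum>n\<in>{N0..<N}. (w n)\<^sup>2)"
      unfolding hi_def by (rule sum.mono_neutral_cong_right) auto
    also have "\<dots> = (\<Sum>n<N. (w n)\<^sup>2) - (\<Sum>n<N0. (w n)\<^sup>2)"
      using sum.atLeastLessThan_concat[of 0 N0 N "\<lambda>n. (w n)\<^sup>2"] False by (simp add: atLeast0LessThan)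
    also have "\<dots> \<le> sq w - (\<Sum>n<N0. (w n)\<^sup>2)" using psum_le_sq[OF finite_lessThan wsm] by simp
    finally show ?thesis using N0(1) by simp
  qed
  have losm: "sm lo" and hism: "sm hi" using psum_bound(1) lops hips by blast+
  have lonr: "nr lo \<le> \<tau>" and hinr: "nr hi \<le> \<tau>"
  proof -
    have "sq lo \<le> \<tau>\<^sup>2" using psum_bound(2) lops by blast
    then show "nr lo \<le> \<tau>" unfolding nr_def using tau(1) real_sqrt_le_mono by fastforce
    have "sq hi \<le> \<tau>\<^sup>2" using psum_bound(2) hips by blast
    then show "nr hi \<le> \<tau>" unfolding nr_def using tau(1) real_sqrt_le_mono by fastforce
  qed
  have lo0: "lo 0 = 0" and hi0: "hi 0 = 0" using w0 by (auto simp: lo_def hi_def)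
  have usm: "sm u" unfolding ueq using nr_diff(1) wsm losm hism by blast
  have ul: "u \<in> l2_half" using usm by (simp add: l2_half_sm u_def w0)
  have "nr w \<le> nr u + nr lo + nr hi"
  proof -
    have "w = (\<lambda>n. (u n + lo n) + hi n)" unfolding ueq by auto
    then have "nr w \<le> nr (\<lambda>n. u n + lo n) + nr hi" using nr_add[OF nr_add(1)[OF usm losm] hism] by metis
    also have "\<dots> \<le> nr u + nr lo + nr hi" using nr_add(2)[OF usm losm] by simp
    finally show ?thesis .
  qed
  then have unr: "1/2 \<le> nr u" using wnr lonr hinr tau by linarith
  have "1/4 \<le> sq u"
  proof -
    have "(1/2)\<^sup>2 \<le> (nr u)\<^sup>2" using unr by (intro power_mono) auto
    then show ?thesis by (simp add: nr_sq power_divide)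
  qed
  moreover have "nr (TT a b x u) \<le> \<delta>"
  proof -
    have e: "TT a b x u = (\<lambda>n. TT a b x w n - TT a b x lo n - TT a b x hi n)"
      unfolding ueq TT_diff by simp
    have s1: "sm (TT a b x w)" "sm (TT a b x lo)" "sm (TT a b x hi)"
      using TT_bound(1) wsm losm hism w0 lo0 hi0 by blast+
    have "nr (TT a b x u) \<le> nr (\<lambda>n. TT a b x w n - TT a b x lo n) + nr (TT a b x hi)"
      unfolding e using nr_diff(2)[OF nr_diff(1)[OF s1(1,2)] s1(3)] .
    also have "\<dots> \<le> nr (TT a b x w) + nr (TT a b x lo) + nr (TT a b x hi)"
      using nr_diff(2)[OF s1(1,2)] by simp
    also have "\<dots> \<le> \<delta>/3 + K0 * nr lo + K0 * nr hi"
      using wT TT_bound(2)[OF losm lo0, of x] TT_bound(2)[OF hism hi0, of x] by (simp add: K0_def)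
    also have "\<dots> \<le> \<delta>/3 + K0 * \<tau> + K0 * \<tau>"
      using lonr hinr K0 by (intro add_mono mult_left_mono) auto
    also have "\<dots> \<le> \<delta>" using tau(3) by simp
    finally show ?thesis .
  qed
  moreover have "\<forall>n. u n \<noteq> 0 \<longrightarrow> L \<le> n \<and> n \<le> N0" by (auto simp: u_def)
  ultimately show ?thesis using ul by blast
qed

end


lemma sum_single_nz:
  assumes "finite A" "\<And>k'. k' \<in> A \<Longrightarrow> k' \<noteq> k \<Longrightarrow> g k' = (0::real)"
  shows "(\<Sum>k'\<in>A. g k') = (if k \<in> A then g k else 0)"
proof -
  have "(\<Sum>k'\<in>A. g k') = (\<Sum>k'\<in>A. if k' = k then g k else 0)"
    using assms by (intro sum.cong) auto
  also have "\<dots> = (if k \<in> A then g k else 0)" using assms(1) by (simp add: sum.delta')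
  finally show ?thesis .
qed

lemma sq_sum_disj:
  assumes "finite F" "\<And>k k'. k \<in> F \<Longrightarrow> k' \<in> F \<Longrightarrow> g k \<noteq> 0 \<Longrightarrow> g k' \<noteq> 0 \<Longrightarrow> k = k'"
  shows "(\<Sum>k\<in>F. g k)\<^sup>2 = (\<Sum>k\<in>F. (g k)\<^sup>2::real)"
proof (cases "\<exists>k\<in>F. g k \<noteq> 0")
  case True
  then obtain k where k: "k \<in> F" "g k \<noteq> 0" by blast
  have z: "g k' = 0" if "k' \<in> F" "k' \<noteq> k" for k' using assms(2)[OF that(1) k(1)] k(2) that(2) by blast
  have "(\<Sum>k\<in>F. g k) = g k" using sum_single_nz[of F k g, OF assms(1) z] k(1) by simp
  moreover have "(\<Sum>k\<in>F. (g k)\<^sup>2) = (g k)\<^sup>2"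
    using sum_single_nz[of F k "\<lambda>k. (g k)\<^sup>2", OF assms(1)] z k(1) by simp
  ultimately show ?thesis by simp
next
  case False
  then show ?thesis by simp
qed

context jac
begin

definition GS :: "(nat \<Rightarrow> nat \<Rightarrow> real) \<Rightarrow> nat set \<Rightarrow> nat \<Rightarrow> real" where
  "GS g S n = (\<Sum>k\<in>S \<inter> {..<n+2}. g k n)"

lemma GS_ext:
  assumes sup: "\<And>k n. g k n \<noteq> 0 \<Longrightarrow> k \<le> n + 1" and K: "n + 2 \<le> K"
  shows "(\<Sum>k\<in>S \<inter> {..<K}. g k n) = GS g S n"
  unfolding GS_def
proof (rule sum.mono_neutral_right)
  show "finite (S \<inter> {..<K})" by simp
  show "S \<inter> {..<n + 2} \<subseteq> S \<inter> {..<K}" using K by auto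
  show "\<forall>i\<in>S \<inter> {..<K} - S \<inter> {..<n + 2}. g i n = 0" using sup by force
qed

lemma GS_psum:
  assumes sup: "\<And>k n. g k n \<noteq> 0 \<Longrightarrow> k \<le> n + 1"
    and disj: "\<And>k k' n. g k n \<noteq> 0 \<Longrightarrow> g k' n \<noteq> 0 \<Longrightarrow> k = k'"
  shows "(\<Sum>n<N. (GS g S n)\<^sup>2) = (\<Sum>k\<in>S \<inter> {..<N+1}. \<Sum>n<N. (g k n)\<^sup>2)"
proof -
  have "(\<Sum>n<N. (GS g S n)\<^sup>2) = (\<Sum>n<N. (\<Sum>k\<in>S \<inter> {..<N+1}. g k n)\<^sup>2)"
    by (intro sum.cong refl) (subst GS_ext[OF sup, symmetric], auto)
  also have "\<dots> = (\<Sum>n<N. \<Sum>k\<in>S \<inter> {..<N+1}. (g k n)\<^sup>2)"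
    by (intro sum.cong refl sq_sum_disj) (auto intro: disj)
  also have "\<dots> = (\<Sum>k\<in>S \<inter> {..<N+1}. \<Sum>n<N. (g k n)\<^sup>2)" by (rule sum.swap)
  finally show ?thesis .
qed

lemma bij_lower:
  assumes bij: "bij_betw (TT a b x) l2_half l2_half"
  shows "\<exists>c0>0. \<forall>u\<in>l2_half. c0 * nr u \<le> nr (TT a b x u)"
proof (rule ccontr)
  assume "\<not> ?thesis"
  then have NB: "\<exists>u\<in>l2_half. nr (TT a b x u) < e * nr u" if "e > 0" for e
    using that by (meson not_le)
  define Q where "Q L \<delta> p \<longleftrightarrow> snd p \<in> l2_half \<and> (\<forall>n. snd p n \<noteq> 0 \<longrightarrow> L \<le> n \<and> n \<le> fst p)
      \<and> 1/4 \<le> sq (snd p) \<and> nr (TT a b x (snd p)) \<le> \<delta>" for L \<delta> and p :: "nat \<times> (nat \<Rightarrow> real)"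
  have exQ: "\<exists>p. Q L \<delta> p" if "0 < \<delta>" for L \<delta>
    using escape[OF bij NB that, of L] unfolding Q_def by auto
  define st where "st = rec_nat (SOME p. Q 1 1 p) (\<lambda>k p. SOME p'. Q (fst p + 3) ((1/2)^(Suc k)) p')"
  define lo where "lo k = (if k = 0 then 1 else fst (st (k - 1)) + 3)" for k
  define hi where "hi k = fst (st k)" for k
  define vv where "vv k = snd (st k)" for k
  have Qk: "Q (lo k) ((1/2)^k) (st k)" for k
  proof (cases k)
    case 0 then show ?thesis using someI_ex[OF exQ[of 1 1]] by (simp add: st_def lo_def)
  next
    case (Suc k')
    have "st k = (SOME p'. Q (fst (st k') + 3) ((1/2)^(Suc k')) p')" using Suc by (simp add: st_def)
    then show ?thesis using someI_ex[OF exQ[of "(1/2)^(Suc k')" "fst (st k') + 3"]] Suc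
      by (simp add: lo_def)
  qed
  have vl: "vv k \<in> l2_half" and vsupp: "\<And>n. vv k n \<noteq> 0 \<Longrightarrow> lo k \<le> n \<and> n \<le> hi k"
    and vsq: "1/4 \<le> sq (vv k)" and vT: "nr (TT a b x (vv k)) \<le> (1/2)^k" for k
    using Qk[of k] unfolding Q_def vv_def hi_def by auto
  have vsm: "sm (vv k)" and v0: "vv k 0 = 0" for k using vl by (auto simp: l2_half_sm)
  have loS: "lo (Suc k) = hi k + 3" for k by (simp add: lo_def hi_def)
  have lohi: "lo k \<le> hi k" for k
  proof -
    have "vv k \<noteq> (\<lambda>n. 0)" using vsq[of k] by (auto simp: sq_def)
    then obtain n where "vv k n \<noteq> 0" by auto
    then show ?thesis using vsupp by force
  qed
  have lomono: "k < k' \<Longrightarrow> hi k + 3 \<le> lo k'" for k k'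
  proof (induction k' arbitrary: k)
    case 0 then show ?case by simp
  next
    case (Suc k')
    show ?case
    proof (cases "k = k'")
      case True then show ?thesis by (simp add: loS)
    next
      case False
      then have "hi k + 3 \<le> lo k'" using Suc by simp
      then show ?thesis using lohi[of k'] loS[of k'] by simp
    qed
  qed
  have klo: "k \<le> lo k" for k
  proof (induction k)
    case 0 then show ?case by simp
  next
    case (Suc k) then show ?case using loS[of k] lohi[of k] by simp
  qed
  define tv where "tv k = TT a b x (vv k)" for k
  have tvsupp: "tv k n \<noteq> 0 \<Longrightarrow> lo k \<le> n + 1 \<and> n \<le> hi k + 1" for k n
  proof (rule ccontr)
    assume h: "tv k n \<noteq> 0" "\<not> (lo k \<le> n + 1 \<and> n \<le> hi k + 1)"
    have z: "vv k m = 0" if "m \<le> n + 1" "n \<le> m + 1" for m using vsupp[of k m] h(2) that by force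
    have "tv k n = 0"
    proof (cases n)
      case 0 then show ?thesis using v0 by (simp add: tv_def TT_def jacobi_op_def)
    next
      case (Suc n')
      then show ?thesis using z[of n'] z[of n] z[of "n+1"] by (simp add: tv_def TT_def jacobi_op_def)
    qed
    then show False using h by simp
  qed
  have gsup: "g k n \<noteq> 0 \<Longrightarrow> k \<le> n + 1" if "g = vv \<or> g = tv" for g k n
    using that vsupp tvsupp klo by (metis le_trans trans_le_add1)
  have gdisj: "g k n \<noteq> 0 \<Longrightarrow> g k' n \<noteq> 0 \<Longrightarrow> k = k'" if "g = vv \<or> g = tv" for g k k' n
  proof (rule ccontr)
    assume h: "g k n \<noteq> 0" "g k' n \<noteq> 0" "k \<noteq> k'"
    have s: "lo j \<le> n + 1 \<and> n \<le> hi j + 1" if "g j n \<noteq> 0" for j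
      using that \<open>g = vv \<or> g = tv\<close> vsupp tvsupp by fastforce
    show False
    proof (cases "k < k'")
      case True then show ?thesis using lomono[OF True] s[OF h(1)] s[OF h(2)] by simp
    next
      case False then have "k' < k" using h(3) by simp
      then show ?thesis using lomono[of k' k] s[OF h(1)] s[OF h(2)] by simp
    qed
  qed
  have vsup': "vv k n \<noteq> 0 \<Longrightarrow> k \<le> n + 1" for k n using gsup[of vv] by blast
  have tsup': "tv k n \<noteq> 0 \<Longrightarrow> k \<le> n + 1" for k n using gsup[of tv] by blast
  have vdisj': "vv k n \<noteq> 0 \<Longrightarrow> vv k' n \<noteq> 0 \<Longrightarrow> k = k'" for k k' n using gdisj[of vv] by blast
  have tdisj': "tv k n \<noteq> 0 \<Longrightarrow> tv k' n \<noteq> 0 \<Longrightarrow> k = k'" for k k' n using gdisj[of tv] by blast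
  define VS where "VS S = GS vv S" for S
  define FS where "FS S = GS tv S" for S
  have VS0: "VS S 0 = 0" for S using v0 by (simp add: VS_def GS_def)
  have TVS: "TT a b x (VS S) = FS S" for S
  proof
    fix n
    let ?F = "\<lambda>m. \<Sum>k\<in>S \<inter> {..<n+3}. vv k m"
    have e: "VS S m = ?F m" if "m \<le> n + 1" for m
      unfolding VS_def using GS_ext[of vv m "n+3" S, OF vsup'] that by simp
    have "TT a b x (VS S) n = TT a b x ?F n"
      unfolding TT_def using jop_eq_local[of n "VS S" ?F a b] e by simp
    also have "\<dots> = (\<Sum>k\<in>S \<inter> {..<n+3}. tv k n)" unfolding tv_def by (simp add: TT_sum)
    also have "\<dots> = FS S n" unfolding FS_def using GS_ext[of tv n "n+3" S, OF tsup'] by simp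
    finally show "TT a b x (VS S) n = FS S n" .
  qed
  have FSl: "FS S \<in> l2_half" for S
  proof -
    have "(\<Sum>n<N. (FS S n)\<^sup>2) \<le> 2" for N
    proof -
      have "(\<Sum>n<N. (FS S n)\<^sup>2) = (\<Sum>k\<in>S \<inter> {..<N+1}. \<Sum>n<N. (tv k n)\<^sup>2)"
        unfolding FS_def by (rule GS_psum[OF tsup' tdisj'])
      also have "\<dots> \<le> (\<Sum>k\<in>S \<inter> {..<N+1}. (1/4)^k)"
      proof (rule sum_mono)
        fix k
        have "(\<Sum>n<N. (tv k n)\<^sup>2) \<le> sq (tv k)"
          unfolding tv_def by (rule psum_le_sq[OF finite_lessThan TT_bound(1)[OF vsm v0]])
        also have "\<dots> = (nr (tv k))\<^sup>2" by (simp add: nr_sq)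
        also have "\<dots> \<le> ((1/2)^k)\<^sup>2" using vT[of k] nr_nonneg unfolding tv_def by (intro power_mono) auto
        also have "\<dots> = (1/4)^k" by (simp add: power_mult_distrib[symmetric] power_even_eq[symmetric] power_mult[symmetric] mult.commute power2_eq_square power_mult_distrib)
        finally show "(\<Sum>n<N. (tv k n)\<^sup>2) \<le> (1/4)^k" .
      qed
      also have "\<dots> \<le> (\<Sum>k<N+1. (1/4::real)^k)" by (rule sum_mono2) auto
      also have "\<dots> \<le> (\<Sum>k. (1/4::real)^k)" by (rule sum_le_suminf) (auto intro: summable_geometric)
      also have "\<dots> \<le> 2" using suminf_geometric[of "1/4::real"] by simp
      finally show ?thesis .
    qed
    then have "sm (FS S)" using psum_bound(1) by blast
    moreover have "FS S 0 = 0"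
    proof -
      have "FS S 0 = TT a b x (VS S) 0" using TVS[of S] by simp
      also have "\<dots> = 0" by (simp add: TT_def jacobi_op_def VS0)
      finally show ?thesis .
    qed
    ultimately show ?thesis by (simp add: l2_half_sm)
  qed
  have VSwin: "VS S n = (if k \<in> S then vv k n else 0)" if "lo k \<le> n" "n \<le> hi k" for S k n
  proof -
    have z: "vv k' n = 0" if "k' \<in> S \<inter> {..<n+2}" "k' \<noteq> k" for k'
    proof (rule ccontr)
      assume "vv k' n \<noteq> 0"
      then have "lo k' \<le> n \<and> n \<le> hi k'" using vsupp by blast
      then show False using lomono[of k k'] lomono[of k' k] \<open>lo k \<le> n\<close> \<open>n \<le> hi k\<close> that(2)
        by (cases "k < k'") auto
    qed
    have "VS S n = (if k \<in> S \<inter> {..<n+2} then vv k n else 0)"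
      unfolding VS_def GS_def by (rule sum_single_nz) (use z in auto)
    moreover have "k < n + 2" using klo[of k] that by simp
    ultimately show ?thesis by simp
  qed
  define win where "win k = {lo k..hi k}" for k
  have windisj: "k \<noteq> k' \<Longrightarrow> win k \<inter> win k' = {}" for k k'
    using lomono[of k k'] lomono[of k' k] by (cases "k < k'") (auto simp: win_def)
  have sqwin: "sq (vv k) = (\<Sum>n\<in>win k. (vv k n)\<^sup>2)" for k
    unfolding sq_def using vsm[of k] vsupp[of k] by (auto simp: sm_def win_def intro!: suminf_finite) (meson not_le)+
  have winsum: "real (card I) / 4 \<le> (\<Sum>n\<in>\<Union>(win ` I). (VS S n)\<^sup>2)" if "finite I" "I \<subseteq> S" for I S
  proof -
    have "(\<Sum>n\<in>\<Union>(win ` I). (VS S n)\<^sup>2) = (\<Sum>k\<in>I. \<Sum>n\<in>win k. (VS S n)\<^sup>2)"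
      by (rule sum.UNION_disjoint) (use that windisj in \<open>auto simp: win_def\<close>)
    also have "\<dots> = (\<Sum>k\<in>I. sq (vv k))"
    proof (rule sum.cong[OF refl])
      fix k assume "k \<in> I"
      then have "(\<Sum>n\<in>win k. (VS S n)\<^sup>2) = (\<Sum>n\<in>win k. (vv k n)\<^sup>2)"
        using VSwin that(2) by (intro sum.cong) (auto simp: win_def)
      then show "(\<Sum>n\<in>win k. (VS S n)\<^sup>2) = sq (vv k)" using sqwin by simp
    qed
    also have "\<dots> \<ge> (\<Sum>k\<in>I. 1/4)" by (rule sum_mono) (rule vsq)
    finally show ?thesis by simp
  qed
  have winE: "VS S n = 0" if "n \<in> \<Union>(win ` I)" "I \<inter> S = {}" for I S n
    using that VSwin by (auto simp: win_def)
  have finwin: "finite (\<Union>(win ` I))" if "finite I" for I using that by (auto simp: win_def)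
  have big: False if "\<And>m::nat. real m / 4 \<le> K" for K
  proof -
    define m where "m = nat \<lceil>4 * K\<rceil> + 1"
    have "4 * K < real m" unfolding m_def by linarith
    then show False using that[of m] by simp
  qed
  define P where "P = PP a b x"
  have decomp: "\<exists>w t. w \<in> l2_half \<and> (\<forall>n. w n = VS S n + t * P n)" for S
  proof -
    obtain w where w: "w \<in> l2_half" "TT a b x w = FS S"
      using bij FSl[of S] unfolding bij_betw_def by (metis imageE)
    define d where "d = (\<lambda>n. w n - VS S n)"
    have Td: "TT a b x d = (\<lambda>n. 0)" unfolding d_def TT_diff w(2) TVS by simp
    have d0: "d 0 = 0" using w(1) VS0 by (simp add: d_def l2_half_sm)
    have "d = (\<lambda>n. d 1 * PP a b x n)"
      by (rule eig_unique[of d, OF d0]) (use fun_cong[OF Td] in \<open>simp add: TT_def\<close>)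
    then have "\<forall>n. w n = VS S n + d 1 * P n" unfolding P_def by (metis d_def diff_add_cancel add.commute)
    then show ?thesis using w(1) by blast
  qed
  obtain wE tE where wE: "wE \<in> l2_half" "\<And>n. wE n = VS {k. even k} n + tE * P n" using decomp by blast
  obtain wO tO where wO: "wO \<in> l2_half" "\<And>n. wO n = VS {k. odd k} n + tO * P n" using decomp by blast
  have wEsm: "sm wE" and wOsm: "sm wO" using wE wO by (auto simp: l2_half_sm)
  define Io where "Io m = (\<lambda>i. 2*i+1) ` {..<m}" for m :: nat
  define Ie where "Ie m = (\<lambda>i. 2*i) ` {..<m}" for m :: nat
  have cIo: "card (Io m) = m" and cIe: "card (Ie m) = m" for m
    unfolding Io_def Ie_def by (subst card_image; auto simp: inj_on_def)+
  have fIo: "finite (Io m)" and fIe: "finite (Ie m)" for m by (auto simp: Io_def Ie_def)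
  show False
  proof (cases "tE = 0")
    case True
    show False
    proof (rule big)
      fix m :: nat
      have "real m / 4 \<le> (\<Sum>n\<in>\<Union>(win ` Ie m). (VS {k. even k} n)\<^sup>2)"
        using winsum[OF fIe, of m "{k. even k}"] cIe by (simp add: Ie_def image_subset_iff)
      also have "\<dots> = (\<Sum>n\<in>\<Union>(win ` Ie m). (wE n)\<^sup>2)" using wE(2) True by simp
      also have "\<dots> \<le> sq wE" by (rule psum_le_sq[OF finwin[OF fIe] wEsm])
      finally show "real m / 4 \<le> sq wE" .
    qed
  next
    case False
    show False
    proof (rule big)
      fix m :: nat
      let ?W = "\<Union>(win ` Io m)"
      have fW: "finite ?W" by (rule finwin[OF fIo])
      have VE0: "VS {k. even k} n = 0" if "n \<in> ?W" for n
        by (rule winE[OF that]) (auto simp: Io_def)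
      have PW: "(\<Sum>n\<in>?W. (P n)\<^sup>2) \<le> sq wE / tE\<^sup>2"
      proof -
        have "tE\<^sup>2 * (\<Sum>n\<in>?W. (P n)\<^sup>2) = (\<Sum>n\<in>?W. (wE n)\<^sup>2)"
          using wE(2) VE0 by (simp add: sum_distrib_left power_mult_distrib)
        also have "\<dots> \<le> sq wE" by (rule psum_le_sq[OF fW wEsm])
        finally show ?thesis using False by (simp add: field_simps)
      qed
      have "real m / 4 \<le> (\<Sum>n\<in>?W. (VS {k. odd k} n)\<^sup>2)"
        using winsum[OF fIo, of m "{k. odd k}"] cIo by (simp add: Io_def image_subset_iff)
      also have "\<dots> \<le> (\<Sum>n\<in>?W. 2 * (wO n)\<^sup>2 + 2 * tO\<^sup>2 * (P n)\<^sup>2)"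
      proof (rule sum_mono)
        fix n
        have "VS {k. odd k} n = wO n - tO * P n" using wO(2) by simp
        moreover have "(p - q)\<^sup>2 \<le> 2 * p\<^sup>2 + 2 * q\<^sup>2" for p q :: real
        proof -
          have "0 \<le> (p + q)\<^sup>2" by simp
          then show ?thesis by (simp add: power2_eq_square algebra_simps)
        qed
        ultimately show "(VS {k. odd k} n)\<^sup>2 \<le> 2 * (wO n)\<^sup>2 + 2 * tO\<^sup>2 * (P n)\<^sup>2"
          by (metis power_mult_distrib mult.assoc)
      qed
      also have "\<dots> = 2 * (\<Sum>n\<in>?W. (wO n)\<^sup>2) + 2 * tO\<^sup>2 * (\<Sum>n\<in>?W. (P n)\<^sup>2)"
        by (simp add: sum.distrib sum_distrib_left)
      also have "\<dots> \<le> 2 * sq wO + 2 * tO\<^sup>2 * (sq wE / tE\<^sup>2)"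
        using psum_le_sq[OF fW wOsm] PW by (intro add_mono mult_left_mono) auto
      finally show "real m / 4 \<le> 2 * sq wO + 2 * tO\<^sup>2 * (sq wE / tE\<^sup>2)" .
    qed
  qed
qed

end


lemma CD_ge: "(opoly a b n x)\<^sup>2 \<le> CD_kernel a b n x x" "1 \<le> CD_kernel a b n x x"
proof -
  have "CD_kernel a b n x x = (\<Sum>j\<le>n. (opoly a b j x)\<^sup>2)" by (simp add: CD_kernel_def power2_eq_square)
  moreover have "(opoly a b n x)\<^sup>2 \<le> (\<Sum>j\<le>n. (opoly a b j x)\<^sup>2)"
    using member_le_sum[of n "{..n}" "\<lambda>j. (opoly a b j x)\<^sup>2"] by simp
  moreover have "(opoly a b 0 x)\<^sup>2 \<le> (\<Sum>j\<le>n. (opoly a b j x)\<^sup>2)"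
    using member_le_sum[of 0 "{..n}" "\<lambda>j. (opoly a b j x)\<^sup>2"] by simp
  ultimately show "(opoly a b n x)\<^sup>2 \<le> CD_kernel a b n x x" "1 \<le> CD_kernel a b n x x" by simp_all
qed

lemma ratio_nonneg: "0 \<le> (opoly a b n x)\<^sup>2 / CD_kernel a b n x x"
  using CD_ge(2)[of a b n x] by simp

lemma TT_eq: "(\<lambda>u. \<lambda>n. jacobi_op a b u n - x * u n) = TT a b x"
  by (simp add: TT_def fun_eq_iff)

lemma spec_TT: "x \<in> jacobi_spectrum a b \<longleftrightarrow> \<not> bij_betw (TT a b x) l2_half l2_half"
  by (simp add: jacobi_spectrum_def TT_eq)

lemma ratio_to0:
  assumes "sm (PP a b x)"
  shows "(\<lambda>n. (opoly a b n x)\<^sup>2 / CD_kernel a b n x x) \<longlonglongrightarrow> 0"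
proof (rule Lim_null_comparison)
  have "(\<lambda>n. (PP a b x n)\<^sup>2) \<longlonglongrightarrow> 0" using assms unfolding sm_def by (rule summable_LIMSEQ_zero)
  then have "(\<lambda>n. (PP a b x (Suc n))\<^sup>2) \<longlonglongrightarrow> 0" by (rule LIMSEQ_Suc)
  then show "(\<lambda>n. (opoly a b n x)\<^sup>2) \<longlonglongrightarrow> 0" by (simp add: PP_def)
  show "\<forall>\<^sub>F n in sequentially. norm ((opoly a b n x)\<^sup>2 / CD_kernel a b n x x) \<le> (opoly a b n x)\<^sup>2"
  proof (intro always_eventually allI)
    fix n
    have "(opoly a b n x)\<^sup>2 / CD_kernel a b n x x \<le> (opoly a b n x)\<^sup>2"
      using CD_ge(2)[of a b n x] by (simp add: divide_le_eq mult_le_cancel_left1)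
    then show "norm ((opoly a b n x)\<^sup>2 / CD_kernel a b n x x) \<le> (opoly a b n x)\<^sup>2"
      using ratio_nonneg[of a b n x] by simp
  qed
qed

context jac
begin

lemma spec_bounded: assumes "y \<in> jacobi_spectrum a b" shows "\<bar>y\<bar> \<le> Jn"
proof (rule ccontr)
  assume h: "\<not> \<bar>y\<bar> \<le> Jn"
  then have y0: "y \<noteq> 0" using Jn_nonneg by auto
  have "bij_betw (\<lambda>u. \<lambda>n. (\<lambda>u n. - y * u n) u n + jacobi_op a b u n) l2_half l2_half"
  proof (rule GP[where cc = "\<bar>y\<bar>" and q = Jn])
    show "\<And>u. u \<in> l2_half \<Longrightarrow> (\<lambda>n. - y * u n) \<in> l2_half" using l2_scale by blast
    show "\<And>u. u \<in> l2_half \<Longrightarrow> jacobi_op a b u \<in> l2_half"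
      using jop_bound(1) by (auto simp: l2_half_sm jacobi_op_def)
    show "\<And>u v. (\<lambda>n. - y * (u n - v n)) = (\<lambda>n. - y * u n - - y * v n)" by (simp add: algebra_simps)
    show "\<And>u v. jacobi_op a b (\<lambda>n. u n - v n) = (\<lambda>n. jacobi_op a b u n - jacobi_op a b v n)"
      by (rule jop_diff)
    show "\<And>u. u \<in> l2_half \<Longrightarrow> \<bar>y\<bar> * nr u \<le> nr (\<lambda>n. - y * u n)" using nr_scale(1)[of "-y"] by simp
    show "bij_betw (\<lambda>u n. - y * u n) l2_half l2_half"
    proof (rule bij_betwI[where g = "\<lambda>u n. - (1/y) * u n"])
      show "(\<lambda>u n. - y * u n) \<in> l2_half \<rightarrow> l2_half" using l2_scale by blast
      show "(\<lambda>u n. - (1/y) * u n) \<in> l2_half \<rightarrow> l2_half" using l2_scale by blast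
    qed (use y0 in auto)
    show "\<And>u. u \<in> l2_half \<Longrightarrow> nr (jacobi_op a b u) \<le> Jn * nr u" using jop_bound(2) by (auto simp: l2_half_sm)
    show "0 \<le> Jn" by (rule Jn_nonneg)
    show "Jn < \<bar>y\<bar>" using h by simp
    show "\<And>w W n. (\<And>n. (\<lambda>k. w k n) \<longlonglongrightarrow> W n) \<Longrightarrow> (\<lambda>k. - y * w k n) \<longlonglongrightarrow> - y * W n"
      by (intro tendsto_intros) 
    show "\<And>w W n. (\<And>n. (\<lambda>k. w k n) \<longlonglongrightarrow> W n) \<Longrightarrow> (\<lambda>k. jacobi_op a b (w k) n) \<longlonglongrightarrow> jacobi_op a b W n"
      by (rule jop_local)
  qed
  moreover have "(\<lambda>u. \<lambda>n. (\<lambda>u n. - y * u n) u n + jacobi_op a b u n) = TT a b y"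
    by (simp add: TT_def fun_eq_iff)
  ultimately show False using assms spec_TT by simp
qed

lemma resolvent_open:
  assumes "x \<notin> jacobi_spectrum a b"
  shows "\<exists>e>0. \<forall>y. \<bar>y - x\<bar> < e \<longrightarrow> y \<notin> jacobi_spectrum a b"
proof -
  have bij: "bij_betw (TT a b x) l2_half l2_half" using assms spec_TT by simp
  obtain c0 where c0: "c0 > 0" "\<And>u. u \<in> l2_half \<Longrightarrow> c0 * nr u \<le> nr (TT a b x u)"
    using bij_lower[OF bij] by blast
  have "y \<notin> jacobi_spectrum a b" if y: "\<bar>y - x\<bar> < c0" for y
  proof -
    have "bij_betw (\<lambda>u. \<lambda>n. TT a b x u n + (\<lambda>u n. (x - y) * u n) u n) l2_half l2_half"
    proof (rule GP[where cc = c0 and q = "\<bar>x - y\<bar>"])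
      show "\<And>u. u \<in> l2_half \<Longrightarrow> TT a b x u \<in> l2_half" by (rule TT_l2)
      show "\<And>u. u \<in> l2_half \<Longrightarrow> (\<lambda>n. (x - y) * u n) \<in> l2_half" using l2_scale by blast
      show "\<And>u v. TT a b x (\<lambda>n. u n - v n) = (\<lambda>n. TT a b x u n - TT a b x v n)" by (rule TT_diff)
      show "\<And>u v. (\<lambda>n. (x - y) * (u n - v n)) = (\<lambda>n. (x - y) * u n - (x - y) * v n)"
        by (simp add: algebra_simps)
      show "\<And>u. u \<in> l2_half \<Longrightarrow> c0 * nr u \<le> nr (TT a b x u)" by (rule c0(2))
      show "bij_betw (TT a b x) l2_half l2_half" by (rule bij)
      show "\<And>u. u \<in> l2_half \<Longrightarrow> nr (\<lambda>n. (x - y) * u n) \<le> \<bar>x - y\<bar> * nr u" using nr_scale(1) by simp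
      show "0 \<le> \<bar>x - y\<bar>" by simp
      show "\<bar>x - y\<bar> < c0" using y by simp
      show "\<And>w W n. (\<And>n. (\<lambda>k. w k n) \<longlonglongrightarrow> W n) \<Longrightarrow> (\<lambda>k. TT a b x (w k) n) \<longlonglongrightarrow> TT a b x W n"
        by (rule TT_local)
      show "\<And>w W n. (\<And>n. (\<lambda>k. w k n) \<longlonglongrightarrow> W n) \<Longrightarrow> (\<lambda>k. (x - y) * w k n) \<longlonglongrightarrow> (x - y) * W n"
        by (intro tendsto_intros)
    qed
    moreover have "(\<lambda>u. \<lambda>n. TT a b x u n + (\<lambda>u n. (x - y) * u n) u n) = TT a b y"
      by (simp add: TT_def fun_eq_iff algebra_simps)
    ultimately show ?thesis using spec_TT by simp
  qed
  then show ?thesis using c0(1) by blast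
qed

lemma spec_closed: "closed (jacobi_spectrum a b)"
  unfolding closed_def open_dist
  using resolvent_open by (simp add: dist_real_def)

lemma disc_eig: assumes "x \<in> jacobi_disc_spectrum a b" shows "sm (PP a b x)"
proof -
  have ne: "jacobi_eigenspace a b x \<noteq> {\<lambda>n. 0}" using assms by (simp add: jacobi_disc_spectrum_def)
  have "(\<lambda>n. 0) \<in> jacobi_eigenspace a b x"
    by (simp add: jacobi_eigenspace_def l2_zero jacobi_op_def fun_eq_iff)
  then obtain u where u: "u \<in> jacobi_eigenspace a b x" "u \<noteq> (\<lambda>n. 0)" using ne by blast
  have ul: "u \<in> l2_half" and ue: "jacobi_op a b u = (\<lambda>n. x * u n)"
    using u(1) by (auto simp: jacobi_eigenspace_def)
  have ueq: "u = (\<lambda>n. u 1 * PP a b x n)"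
    by (rule eig_unique) (use ul ue in \<open>auto simp: l2_half_sm\<close>)
  have u1: "u 1 \<noteq> 0" using u(2) ueq by (metis mult_zero_left)
  have "PP a b x = (\<lambda>n. (1 / u 1) * u n)" using u1 by (subst ueq) auto
  then show ?thesis using nr_scale(2)[of u "1 / u 1"] ul by (simp add: l2_half_sm)
qed

end


context jac
begin

lemma p_full: "x * opoly a b M x = a (M+1) * opoly a b (M+1) x + b (M+1) * opoly a b M x
    + (if M = 0 then 0 else a M * opoly a b (M-1) x)"
proof (cases M)
  case 0 then show ?thesis using p_rec1[of x] by simp
next
  case (Suc n)
  then show ?thesis using p_rec[of n x] by (simp add: algebra_simps)
qed

lemma core:
  fixes xs :: "nat \<Rightarrow> real" and ns :: "nat \<Rightarrow> nat"
  assumes xc: "xs \<longlonglongrightarrow> x0" and nc: "filterlim ns at_top sequentially" and ep: "0 < \<epsilon>"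
    and rat: "\<And>j. \<epsilon> * CD_kernel a b (ns j) (xs j) (xs j) \<le> (opoly a b (ns j) (xs j))\<^sup>2"
  shows "x0 \<notin> Xi_set a b"
proof
  assume Xi: "x0 \<in> Xi_set a b"
  define pN where "pN j = opoly a b (ns j) (xs j)" for j
  have pN0: "pN j \<noteq> 0" for j
  proof -
    have "0 < CD_kernel a b (ns j) (xs j) (xs j)" using CD_ge(2)[of a b "ns j" "xs j"] by linarith
    then have "0 < \<epsilon> * CD_kernel a b (ns j) (xs j) (xs j)" using ep by simp
    then have "0 < (pN j)\<^sup>2" using rat[of j] unfolding pN_def by linarith
    then show ?thesis by auto
  qed
  define u where "u j k = (if 0 \<le> int (ns j) + k then opoly a b (nat (int (ns j) + k)) (xs j) / pN j else 0)"
    for j and k :: int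
  have u0: "u j 0 = 1" for j using pN0 by (simp add: u_def pN_def)
  have usum: "(\<Sum>i<L. (u j (- int i))\<^sup>2) \<le> 1 / \<epsilon>" for j L
  proof -
    define N where "N = ns j"
    define f where "f i = (if i \<le> N then (opoly a b (N - i) (xs j) / pN j)\<^sup>2 else 0)" for i
    have ue: "(u j (- int i))\<^sup>2 = f i" for i
      by (auto simp: u_def f_def N_def nat_diff_distrib' of_nat_diff)
    have "(\<Sum>i<L. (u j (- int i))\<^sup>2) = (\<Sum>i<L. f i)" using ue by simp
    also have "\<dots> \<le> (\<Sum>i\<in>{..<L} \<union> {..N}. f i)" by (rule sum_mono2) (auto simp: f_def)
    also have "\<dots> = (\<Sum>i\<in>{0..N}. f i)"
      by (rule sum.mono_neutral_right) (auto simp: f_def)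
    also have "\<dots> = (\<Sum>i\<in>{0..N}. (opoly a b (N - i) (xs j) / pN j)\<^sup>2)"
      by (rule sum.cong) (auto simp: f_def)
    also have "\<dots> = (\<Sum>i\<in>{0..N}. (opoly a b i (xs j) / pN j)\<^sup>2)"
      by (subst sum.atLeastAtMost_rev) simp
    also have "\<dots> = CD_kernel a b N (xs j) (xs j) / (pN j)\<^sup>2"
      by (simp add: CD_kernel_def sum_divide_distrib power_divide atLeast0AtMost power2_eq_square)
    also have "\<dots> \<le> 1 / \<epsilon>" using rat[of j] ep pN0[of j]
      by (simp add: N_def pN_def field_simps)
    finally show ?thesis .
  qed
  have um1: "\<bar>u j (-1)\<bar> \<le> 1 + 1 / \<epsilon>" for j
  proof -
    have "(u j 0)\<^sup>2 + (u j (-1))\<^sup>2 \<le> 1 / \<epsilon>"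
      using usum[of j 2] by (simp add: numeral_2_eq_2)
    then have "(u j (-1))\<^sup>2 \<le> 1 / \<epsilon>" using zero_le_power2[of "u j 0"] by linarith
    moreover have "\<bar>t\<bar> \<le> 1 + t\<^sup>2" for t :: real
    proof (cases "\<bar>t\<bar> \<le> 1")
      case True then show ?thesis using zero_le_power2[of t] by linarith
    next
      case False
      then have "\<bar>t\<bar> * 1 \<le> \<bar>t\<bar> * \<bar>t\<bar>" by (intro mult_left_mono) auto
      moreover have "\<bar>t\<bar> * \<bar>t\<bar> = t\<^sup>2" by (simp add: power2_eq_square)
      ultimately show ?thesis by linarith
    qed
    ultimately show ?thesis by (meson add_left_mono order_trans)
  qed
  define A0 where "A0 j k = a (nat (int (ns j + 1) + k))" for j and k :: int
  define B0 where "B0 j k = b (nat (int (ns j + 1) + k))" for j and k :: int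
  have urec: "xs j * u j k = A0 j k * u j (k+1) + B0 j k * u j k + A0 j (k-1) * u j (k-1)"
    if "0 \<le> int (ns j) + k" for j k
  proof -
    define M where "M = nat (int (ns j) + k)"
    have M: "int M = int (ns j) + k" using that by (simp add: M_def)
    have i1: "int (ns j + 1) + k = int (M+1)" and i2: "int (ns j + 1) + (k - 1) = int M" using M by simp_all
    have e1: "A0 j k = a (M+1)" "B0 j k = b (M+1)" "A0 j (k-1) = a M"
      unfolding A0_def B0_def by (simp_all only: i1 i2 nat_int)
    have i0: "int (ns j) + k = int M" and i3: "int (ns j) + (k+1) = int (M+1)"
      and i4: "int (ns j) + (k-1) = int M - 1" using M by simp_all
    have e2: "u j k = opoly a b M (xs j) / pN j" "u j (k+1) = opoly a b (M+1) (xs j) / pN j"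
      unfolding u_def i0 i3 nat_int by simp_all
    have e3: "u j (k-1) = (if M = 0 then 0 else opoly a b (M-1) (xs j) / pN j)"
      unfolding u_def i4 by (cases M) (auto simp: nat_diff_distrib)
    have "xs j * opoly a b M (xs j) = a (M+1) * opoly a b (M+1) (xs j) + b (M+1) * opoly a b M (xs j)
      + (if M = 0 then 0 else a M * opoly a b (M-1) (xs j))" by (rule p_full)
    then show ?thesis unfolding e1 e2 e3 using pN0[of j]
      by (auto simp: field_simps)
  qed
  define R where "R = (\<lambda>_::int \<times> nat. \<bar>a 0\<bar> + C + \<bar>b 0\<bar> + B + 1 + 1 / \<epsilon>)"
  define F where "F j kt = (if snd kt = 0 then A0 j (fst kt) else if snd kt = 1 then B0 j (fst kt) else u j (-1))"
    for j and kt :: "int \<times> nat"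
  have Ab: "\<bar>a m\<bar> \<le> \<bar>a 0\<bar> + C" for m using aabs[of m] Cpos by (cases "m = 0") auto
  have Bb: "\<bar>b m\<bar> \<le> \<bar>b 0\<bar> + B" for m using bbd[of m] Bnn by (cases "m = 0") auto
  have Fb: "\<bar>F j kt\<bar> \<le> R kt" for j kt
  proof -
    have ie: "0 < 1 / \<epsilon>" using ep by simp
    have h1: "\<bar>a m\<bar> \<le> R kt" for m using Ab[of m] Bnn ie abs_ge_zero[of "b 0"] unfolding R_def by linarith
    have h2: "\<bar>b m\<bar> \<le> R kt" for m using Bb[of m] Cpos ie abs_ge_zero[of "a 0"] unfolding R_def by linarith
    have h3: "\<bar>u j (-1)\<bar> \<le> R kt" using um1[of j] Cpos Bnn abs_ge_zero[of "a 0"] abs_ge_zero[of "b 0"] unfolding R_def by linarith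
    show ?thesis unfolding F_def A0_def B0_def using h1 h2 h3 by auto
  qed
  obtain r where r: "strict_mono r" "\<And>kt. convergent (\<lambda>j. F (r j) kt)"
    using extract_conv[of F R] Fb by blast
  define uu where "uu j k = u (r j) k" for j k
  define xx where "xx j = xs (r j)" for j
  define AA where "AA j k = A0 (r j) k" for j k
  define BB where "BB j k = B0 (r j) k" for j k
  define ar where "ar k = lim (\<lambda>j. AA j k)" for k
  define br where "br k = lim (\<lambda>j. BB j k)" for k
  have Ac: "(\<lambda>j. AA j k) \<longlonglongrightarrow> ar k" for k
    using r(2)[of "(k, 0)"] by (simp add: F_def AA_def ar_def convergent_LIMSEQ_iff)
  have Bc: "(\<lambda>j. BB j k) \<longlonglongrightarrow> br k" for k
    using r(2)[of "(k, 1)"] by (simp add: F_def BB_def br_def convergent_LIMSEQ_iff)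
  have um1c: "convergent (\<lambda>j. uu j (-1))"
    using r(2)[of "(0, 2)"] by (simp add: F_def uu_def)
  have xxc: "xx \<longlonglongrightarrow> x0" unfolding xx_def using xc r(1) by (rule LIMSEQ_subseq_LIMSEQ[unfolded o_def])
  have nr: "filterlim (\<lambda>j. ns (r j)) at_top sequentially"
    using filterlim_compose[OF nc filterlim_subseq[OF r(1)]] by (simp add: o_def)
  have EV: "\<forall>\<^sub>F j in sequentially. K \<le> int (ns (r j))" for K :: int
  proof -
    have "\<forall>\<^sub>F j in sequentially. nat K \<le> ns (r j)" using nr by (simp add: filterlim_at_top)
    then show ?thesis by eventually_elim linarith
  qed
  have AAc: "\<forall>\<^sub>F j in sequentially. c \<le> AA j k" for k
    using EV[of "-k"] by eventually_elim (auto simp: AA_def A0_def intro!: alow)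
  have arc: "c \<le> ar k" for k by (rule tendsto_lowerbound[OF Ac AAc]) simp
  have ar0: "ar k \<noteq> 0" for k using arc[of k] cpos by simp
  have AA0: "\<forall>\<^sub>F j in sequentially. AA j k \<noteq> 0" for k
    using AAc[of k] by eventually_elim (use cpos in auto)
  have rec: "\<forall>\<^sub>F j in sequentially. xx j * uu j k = AA j k * uu j (k+1) + BB j k * uu j k + AA j (k-1) * uu j (k-1)" for k
    using EV[of "-k"] by eventually_elim (auto simp: xx_def uu_def AA_def BB_def intro!: urec)
  have up: "convergent (\<lambda>j. uu j (k+1))" if c1: "convergent (\<lambda>j. uu j k)" and c2: "convergent (\<lambda>j. uu j (k-1))" for k
  proof -
    have t1: "(\<lambda>j. (xx j * uu j k - BB j k * uu j k - AA j (k-1) * uu j (k-1)) / AA j k)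
        \<longlonglongrightarrow> (x0 * lim (\<lambda>j. uu j k) - br k * lim (\<lambda>j. uu j k) - ar (k-1) * lim (\<lambda>j. uu j (k-1))) / ar k"
      using c1 c2 ar0[of k] by (intro tendsto_intros xxc Ac Bc) (auto simp: convergent_LIMSEQ_iff)
    have ev: "\<forall>\<^sub>F j in sequentially. (xx j * uu j k - BB j k * uu j k - AA j (k-1) * uu j (k-1)) / AA j k = uu j (k+1)"
      using eventually_conj[OF rec[of k] AA0[of k]] by eventually_elim (auto simp: field_simps)
    show ?thesis using t1 unfolding tendsto_cong[OF ev] convergent_def by blast
  qed
  have down: "convergent (\<lambda>j. uu j (k-1))" if c1: "convergent (\<lambda>j. uu j k)" and c2: "convergent (\<lambda>j. uu j (k+1))" for k
  proof -
    have t1: "(\<lambda>j. (xx j * uu j k - AA j k * uu j (k+1) - BB j k * uu j k) / AA j (k-1))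
        \<longlonglongrightarrow> (x0 * lim (\<lambda>j. uu j k) - ar k * lim (\<lambda>j. uu j (k+1)) - br k * lim (\<lambda>j. uu j k)) / ar (k-1)"
      using c1 c2 ar0[of "k-1"] by (intro tendsto_intros xxc Ac Bc) (auto simp: convergent_LIMSEQ_iff)
    have ev: "\<forall>\<^sub>F j in sequentially. (xx j * uu j k - AA j k * uu j (k+1) - BB j k * uu j k) / AA j (k-1) = uu j (k-1)"
      using eventually_conj[OF rec[of k] AA0[of "k-1"]] by eventually_elim (auto simp: field_simps)
    show ?thesis using t1 unfolding tendsto_cong[OF ev] convergent_def by blast
  qed
  have uu0: "uu j 0 = 1" for j by (simp add: uu_def u0)
  have c0: "convergent (\<lambda>j. uu j 0)" by (simp add: uu0 convergent_const)
  have cup: "convergent (\<lambda>j. uu j (int i)) \<and> convergent (\<lambda>j. uu j (int i - 1))" for i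
  proof (induction i)
    case 0 then show ?case using c0 um1c by simp
  next
    case (Suc i)
    then have "convergent (\<lambda>j. uu j (int i + 1))" using up[of "int i"] by simp
    then show ?case using Suc by (simp add: add.commute)
  qed
  have cdown: "convergent (\<lambda>j. uu j (- int i)) \<and> convergent (\<lambda>j. uu j (- int i + 1))" for i
  proof (induction i)
    case 0 then show ?case using c0 cup[of 1] by simp
  next
    case (Suc i)
    then have "convergent (\<lambda>j. uu j (- int i - 1))" using down[of "- int i"] by simp
    moreover have "- int (Suc i) = - int i - 1" "- int (Suc i) + 1 = - int i" by simp_all
    ultimately show ?case using Suc by (simp only:)
  qed
  have call: "convergent (\<lambda>j. uu j k)" for k
  proof (cases "0 \<le> k")
    case True then show ?thesis using cup[of "nat k"] by simp
  next
    case False then show ?thesis using cdown[of "nat (-k)"] by simp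
  qed
  define U where "U k = lim (\<lambda>j. uu j k)" for k
  have Uc: "(\<lambda>j. uu j k) \<longlonglongrightarrow> U k" for k using call[of k] by (simp add: U_def convergent_LIMSEQ_iff)
  have U0: "U 0 = 1" using Uc[of 0] uu0 by (simp add: LIMSEQ_const_iff)
  have Ueq: "ar k * U (k+1) + br k * U k + ar (k-1) * U (k-1) = x0 * U k" for k
  proof -
    have t1: "(\<lambda>j. xx j * uu j k) \<longlonglongrightarrow> x0 * U k" by (intro tendsto_intros xxc Uc)
    have t2: "(\<lambda>j. AA j k * uu j (k+1) + BB j k * uu j k + AA j (k-1) * uu j (k-1))
       \<longlonglongrightarrow> ar k * U (k+1) + br k * U k + ar (k-1) * U (k-1)" by (intro tendsto_intros Ac Bc Uc)
    have "(\<lambda>j. xx j * uu j k) \<longlonglongrightarrow> ar k * U (k+1) + br k * U k + ar (k-1) * U (k-1)"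
      using t2 tendsto_cong[OF rec[of k]] by simp
    then show ?thesis using t1 LIMSEQ_unique by metis
  qed
  have Ups: "(\<Sum>i<L. (U (- int i))\<^sup>2) \<le> 1 / \<epsilon>" for L
  proof (rule LIMSEQ_le_const2)
    show "(\<lambda>j. \<Sum>i<L. (uu j (- int i))\<^sup>2) \<longlonglongrightarrow> (\<Sum>i<L. (U (- int i))\<^sup>2)" by (intro tendsto_intros Uc)
    show "\<exists>N. \<forall>j\<ge>N. (\<Sum>i<L. (uu j (- int i))\<^sup>2) \<le> 1 / \<epsilon>" using usum by (auto simp: uu_def)
  qed
  have Usum: "summable (\<lambda>i::nat. (U (- int i))\<^sup>2)"
    by (rule summableI_nonneg_bounded[where x = "1/\<epsilon>"]) (use Ups in auto)
  define m where "m j = ns (r j) + 1" for j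
  have RL: "is_right_limit a b ar br"
    unfolding is_right_limit_def
  proof (intro exI conjI allI)
    show "filterlim m at_top sequentially" unfolding m_def filterlim_at_top
    proof
      fix Z :: nat
      show "\<forall>\<^sub>F j in sequentially. Z \<le> ns (r j) + 1"
      proof -
        have "\<forall>\<^sub>F j in sequentially. Z \<le> ns (r j)" using nr by (simp add: filterlim_at_top)
        then show ?thesis by eventually_elim simp
      qed
    qed
    fix n :: int
    show "(\<lambda>j. a (nat (int (m j) + n))) \<longlonglongrightarrow> ar n" using Ac[of n] by (simp add: AA_def A0_def m_def)
    show "(\<lambda>j. b (nat (int (m j) + n))) \<longlonglongrightarrow> br n" using Bc[of n] by (simp add: BB_def B0_def m_def)
  qed
  define uc where "uc n = complex_of_real (U n)" for n
  have "(\<forall>n. of_real (ar n) * uc (n + 1) + of_real (br n) * uc n + of_real (ar (n - 1)) * uc (n - 1)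
                = of_real x0 * uc n) \<and> uc \<noteq> (\<lambda>n. 0)"
  proof
    show "\<forall>n. of_real (ar n) * uc (n + 1) + of_real (br n) * uc n + of_real (ar (n - 1)) * uc (n - 1) = of_real x0 * uc n"
    proof
      fix n
      have "complex_of_real (ar n * U (n+1) + br n * U n + ar (n-1) * U (n-1)) = complex_of_real (x0 * U n)"
        using Ueq[of n] by simp
      then show "of_real (ar n) * uc (n + 1) + of_real (br n) * uc n + of_real (ar (n - 1)) * uc (n - 1) = of_real x0 * uc n"
        by (simp add: uc_def)
    qed
    show "uc \<noteq> (\<lambda>n. 0)" using U0 by (auto simp: uc_def fun_eq_iff intro!: exI[of _ 0])
  qed
  moreover have "summable (\<lambda>k :: nat. (cmod (uc (- int k)))\<^sup>2)" using Usum by (simp add: uc_def)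
  ultimately show False using Xi RL unfolding Xi_set_def by blast
qed
end


lemma unif_by_seq:
  fixes g :: "nat \<Rightarrow> real \<Rightarrow> real"
  assumes nn: "\<And>n x. 0 \<le> g n x"
    and H: "\<And>xs ns e. (\<And>j. xs j \<in> S) \<Longrightarrow> filterlim ns at_top sequentially \<Longrightarrow> 0 < e
               \<Longrightarrow> (\<And>j. e \<le> g (ns j) (xs j)) \<Longrightarrow> False"
  shows "uniform_limit S g (\<lambda>x. 0) sequentially"
  unfolding uniform_limit_iff
proof (intro allI impI)
  fix e :: real assume e: "0 < e"
  show "\<forall>\<^sub>F n in sequentially. \<forall>x\<in>S. dist (g n x) 0 < e"
  proof (rule ccontr)
    assume "\<not> ?thesis"
    then have "\<forall>N. \<exists>n\<ge>N. \<exists>x\<in>S. e \<le> g n x"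
      unfolding eventually_sequentially using nn by (auto simp: dist_real_def not_less)
    then obtain ns xs where nx: "\<And>N. ns N \<ge> N" "\<And>N. xs N \<in> S" "\<And>N. e \<le> g (ns N) (xs N)"
      by metis
    have "filterlim ns at_top sequentially" unfolding filterlim_at_top
    proof
      fix Z show "\<forall>\<^sub>F N in sequentially. Z \<le> ns N"
        by (rule eventually_sequentiallyI[of Z]) (use nx(1) le_trans in blast)
    qed
    then show False using H[of xs ns e] nx e by blast
  qed
qed

lemma ratio_ge:
  assumes "e \<le> (opoly a b n x)\<^sup>2 / CD_kernel a b n x x"
  shows "e * CD_kernel a b n x x \<le> (opoly a b n x)\<^sup>2"
proof -
  have "0 < CD_kernel a b n x x" using CD_ge(2)[of a b n x] by linarith
  then show ?thesis using assms by (simp add: le_divide_eq)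
qed

context jac
begin

lemma part1:
  assumes K: "compact K" "K \<subseteq> Xi_set a b"
  shows "uniform_limit K (\<lambda>n x. (opoly a b n x)\<^sup>2 / CD_kernel a b n x x) (\<lambda>x. 0) sequentially"
proof (rule unif_by_seq[OF ratio_nonneg])
  fix xs ns and e :: real
  assume xs: "\<And>j. xs j \<in> K" and ns: "filterlim ns at_top sequentially" and e: "0 < e"
    and rt: "\<And>j. e \<le> (opoly a b (ns j) (xs j))\<^sup>2 / CD_kernel a b (ns j) (xs j) (xs j)"
  obtain x0 r where x0: "x0 \<in> K" "strict_mono r" "(xs \<circ> r) \<longlonglongrightarrow> x0"
    using compact_imp_seq_compact[OF K(1)] xs unfolding seq_compact_def by metis
  have "x0 \<notin> Xi_set a b"
  proof (rule core[of "xs \<circ> r" x0 "ns \<circ> r" e])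
    show "(xs \<circ> r) \<longlonglongrightarrow> x0" by fact
    show "filterlim (ns \<circ> r) at_top sequentially" using filterlim_compose[OF ns filterlim_subseq[OF x0(2)]] by (simp add: o_def)
    show "0 < e" by fact
    show "\<And>j. e * CD_kernel a b ((ns \<circ> r) j) ((xs \<circ> r) j) ((xs \<circ> r) j) \<le> (opoly a b ((ns \<circ> r) j) ((xs \<circ> r) j))\<^sup>2"
      using ratio_ge rt by simp
  qed
  then show False using x0(1) K(2) by blast
qed

lemma part2:
  assumes ess: "jacobi_ess_spectrum a b \<subseteq> Xi_set a b"
  shows "uniform_limit (jacobi_spectrum a b) (\<lambda>n x. (opoly a b n x)\<^sup>2 / CD_kernel a b n x x) (\<lambda>x. 0) sequentially"
proof (rule unif_by_seq[OF ratio_nonneg])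
  fix xs ns and e :: real
  assume xs: "\<And>j. xs j \<in> jacobi_spectrum a b" and ns: "filterlim ns at_top sequentially" and e: "0 < e"
    and rt: "\<And>j. e \<le> (opoly a b (ns j) (xs j))\<^sup>2 / CD_kernel a b (ns j) (xs j) (xs j)"
  have "bounded (jacobi_spectrum a b)"
    unfolding bounded_iff using spec_bounded by auto
  then have cpt: "compact (jacobi_spectrum a b)" using spec_closed by (simp add: compact_eq_bounded_closed)
  obtain x0 r where x0: "x0 \<in> jacobi_spectrum a b" "strict_mono r" "(xs \<circ> r) \<longlonglongrightarrow> x0"
    using compact_imp_seq_compact[OF cpt] xs unfolding seq_compact_def by metis
  have nsr: "filterlim (ns \<circ> r) at_top sequentially" using filterlim_compose[OF ns filterlim_subseq[OF x0(2)]] by (simp add: o_def)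
  have "x0 \<notin> Xi_set a b"
  proof (rule core[of "xs \<circ> r" x0 "ns \<circ> r" e])
    show "(xs \<circ> r) \<longlonglongrightarrow> x0" by fact
    show "filterlim (ns \<circ> r) at_top sequentially" by fact
    show "0 < e" by fact
    show "\<And>j. e * CD_kernel a b ((ns \<circ> r) j) ((xs \<circ> r) j) ((xs \<circ> r) j) \<le> (opoly a b ((ns \<circ> r) j) ((xs \<circ> r) j))\<^sup>2"
      using ratio_ge rt by simp
  qed
  then have disc: "x0 \<in> jacobi_disc_spectrum a b" using ess x0(1) by (auto simp: jacobi_ess_spectrum_def)
  then obtain d where d: "d > 0" "ball x0 d \<inter> jacobi_spectrum a b = {x0}"
    by (auto simp: jacobi_disc_spectrum_def)
  have "\<forall>\<^sub>F j in sequentially. (xs \<circ> r) j \<in> ball x0 d"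
    using x0(3) d(1) by (simp add: tendsto_iff dist_commute)
  then have evx: "\<forall>\<^sub>F j in sequentially. xs (r j) = x0"
    by eventually_elim (use d(2) xs in auto)
  have t0: "(\<lambda>j. (opoly a b ((ns \<circ> r) j) x0)\<^sup>2 / CD_kernel a b ((ns \<circ> r) j) x0 x0) \<longlonglongrightarrow> 0"
    using filterlim_compose[OF ratio_to0[OF disc_eig[OF disc]] nsr] by (simp add: o_def)
  have "\<forall>\<^sub>F j in sequentially. e \<le> (opoly a b ((ns \<circ> r) j) x0)\<^sup>2 / CD_kernel a b ((ns \<circ> r) j) x0 x0"
    using evx by eventually_elim (use rt in \<open>metis comp_apply\<close>)
  then have "e \<le> 0" using tendsto_lowerbound[OF t0] by simp
  then show False using e by simp
qed

end

theorem theorem8p1: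
  fixes a b :: "nat \<Rightarrow> real"
  assumes a_lower: "\<exists>c>0. \<forall>n\<ge>1. c \<le> a n"
    and a_upper: "\<exists>C. \<forall>n\<ge>1. a n \<le> C"
    and b_bounded: "\<exists>B. \<forall>n\<ge>1. \<bar>b n\<bar> \<le> B"
  shows "(\<forall>K. compact K \<and> K \<subseteq> Xi_set a b \<longrightarrow>
           uniform_limit K (\<lambda>n x. (opoly a b n x)\<^sup>2 / CD_kernel a b n x x) (\<lambda>x. 0) sequentially) \<and>
         (jacobi_ess_spectrum a b \<subseteq> Xi_set a b \<longrightarrow>
           uniform_limit (jacobi_spectrum a b)
             (\<lambda>n x. (opoly a b n x)\<^sup>2 / CD_kernel a b n x x) (\<lambda>x. 0) sequentially)"
proof -
  obtain c where c: "c > 0" "\<And>n. n \<ge> 1 \<Longrightarrow> c \<le> a n" using a_lower by blast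
  obtain C where C: "\<And>n. n \<ge> 1 \<Longrightarrow> a n \<le> C" using a_upper by blast
  obtain B where B: "\<And>n. n \<ge> 1 \<Longrightarrow> \<bar>b n\<bar> \<le> B" using b_bounded by blast
  interpret jac a b c C B by unfold_locales (use c C B in auto)
  show ?thesis using part1 part2 by blast
qed


end
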